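(* Let $[a,b]\subset\mathbb R$, $n,m,m_d\in\mathbb N$, and let $\mathcal J=\sum_{j=0}^{m}P_j\partial_z^j$ with constant matrices $P_j\in\mathbb R^{n\times n}$ satisfying $P_j=(-1)^{j+1}P_j^\top$ for $j\in[0:m]$. Let $\mathcal I=\{(i_1,j_1),\ldots,(i_l,j_l)\}\subset[1:n]\times[0:m_d]$ be a set of distinct index pairs ordered so that $j_1\le j_2\le\cdots\le j_l$, let $H:\mathbb R^l\to\mathbb R$ be smooth, and consider the Hamiltonian functional $\mathcal H(x)=\int_a^b H\big(\partial_z^{j_1}x_{i_1}(z),\ldots,\partial_z^{j_l}x_{i_l}(z)\big)\,\mathrm dz$ for sufficiently smooth $x:[a,b]\to\mathbb R^n$. Let $x$ be a (sufficiently smooth) solution of the Hamiltonian system $\frac{\mathrm d}{\mathrm dt}x=\mathcal J\,\delta_x\mathcal H(x)$, and define the extended state $\bar x=(\partial_z^{j_1}x_{i_1},\ldots,\partial_z^{j_l}x_{i_l})^\top$ and the lifted functional $\bar{\mathcal H}(\bar x)=\int_a^b H(\bar x_1(z),\ldots,\bar x_l(z))\,\mathrm dz$, in which $\bar x_1,\ldots,\bar x_l$ are regarded as independent functions. Then $\bar x$ satisfies the Hamiltonian system $$\frac{\mathrm d}{\mathrm dt}\bar x=\mathbb J\,\delta_{\bar x}\bar{\mathcal H}(\bar x),$$ where $\mathbb J$ is the $l\times l$ matrix differential operator with $(p,q)$-entry $\mathbb J_{pq}=\partial_z^{j_p}\,\mathcal J_{i_p i_q}\,(-\partial_z)^{j_q}$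 for $p,q\in[1:l]$ (equivalently $\mathbb J=D_+\,(\mathcal J_{i_pi_q})_{p,q=1}^l\,D_-$ with $D_\pm=\operatorname{diag}((\pm\partial_z)^{j_1},\ldots,(\pm\partial_z)^{j_l})$), and $\mathbb J$ is formally skew-adjoint.
   Context: For a matrix differential operator $\mathcal J=\sum_j P_j\partial_z^j$, $\mathcal J_{ik}$ denotes the scalar differential operator $\sum_j (P_j)_{ik}\partial_z^j$. The variational derivative $\delta_x\mathcal H(x)$ of a functional $\mathcal H$ is the function defined by $\frac{d}{d\varepsilon}\big|_{\varepsilon=0}\mathcal H(x+\varepsilon\eta)=\int_a^b\langle\delta_x\mathcal H(x)(z),\eta(z)\rangle_{\mathbb R^n}\,\mathrm dz$ for all $\eta\in H_0^{m_d}([a,b],\mathbb R^n)$. Since in $\bar{\mathcal H}$ the $\bar x_k$ are independent variables, $\delta_{\bar x}\bar{\mathcal H}(\bar x)=\big(\tfrac{\partial H}{\partial y_1}(\bar x),\ldots,\tfrac{\partial H}{\partial y_l}(\bar x)\big)^\top$. A matrix differential operator $\mathbb J$ is formally skew-adjoint if it equals minus its formal $L^2$-adjoint, i.e. $\int_a^b\langle e,\mathbb J f\rangle\,\mathrm dz=-\int_a^b\langle\mathbb J e,f\rangle\,\mathrm dz$ for all smooth compactly supported $e,f$. *)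

theory Defs
  imports "HOL-Analysis.Analysis"
begin

definition dz :: "nat \<Rightarrow> (real \<Rightarrow> real) \<Rightarrow> real \<Rightarrow> real" where
  "dz k f = (deriv ^^ k) f"

definition pder :: "'a::euclidean_space \<Rightarrow> ('a \<Rightarrow> real) \<Rightarrow> 'a \<Rightarrow> real" where
  "pder b f = (\<lambda>y. deriv (\<lambda>s. f (y + s *\<^sub>R b)) 0)"

definition smooth :: "('a::euclidean_space \<Rightarrow> real) \<Rightarrow> bool" where
  "smooth f \<longleftrightarrow> (\<forall>bs. set bs \<subseteq> Basis \<longrightarrow>
      continuous_on UNIV (foldr pder bs f) \<and>
      (\<forall>b\<in>Basis. \<forall>y. (\<lambda>s. foldr pder bs f (y + s *\<^sub>R b)) differentiable (at 0)))"

definition test_fun :: "real \<Rightarrow> real \<Rightarrow> (real \<Rightarrow> real^'k) \<Rightarrow> bool" where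
  "test_fun a b \<eta> \<longleftrightarrow> (\<forall>i. smooth (\<lambda>z. \<eta> z $ i)) \<and>
      (\<exists>c d. a < c \<and> c \<le> d \<and> d < b \<and> (\<forall>z. z \<notin> {c..d} \<longrightarrow> \<eta> z = 0))"

text \<open>\<open>\<H>(x) = \<integral>_a^b H(\<partial>^{j_1} x_{i_1}, ..., \<partial>^{j_l} x_{i_l}) dz\<close>; the index pairs are
  \<open>I p = (i_p, j_p)\<close>.\<close>
definition Hfunc :: "real \<Rightarrow> real \<Rightarrow> (real^'l \<Rightarrow> real) \<Rightarrow> ('l \<Rightarrow> 'n \<times> nat)
    \<Rightarrow> (real \<Rightarrow> real^'n) \<Rightarrow> real" where
  "Hfunc a b H I x = integral {a..b}
     (\<lambda>z. H (\<chi> p. dz (snd (I p)) (\<lambda>w. x w $ fst (I p)) z))"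

definition is_var_deriv :: "real \<Rightarrow> real \<Rightarrow> ((real \<Rightarrow> real^'n) \<Rightarrow> real)
    \<Rightarrow> (real \<Rightarrow> real^'n) \<Rightarrow> (real \<Rightarrow> real^'n) \<Rightarrow> bool" where
  "is_var_deriv a b F x g \<longleftrightarrow> (\<forall>\<eta>. test_fun a b \<eta> \<longrightarrow>
      ((\<lambda>\<epsilon>. F (\<lambda>z. x z + \<epsilon> *\<^sub>R \<eta> z)) has_real_derivative
        integral {a..b} (\<lambda>z. g z \<bullet> \<eta> z)) (at 0))"

definition Jentry :: "(nat \<Rightarrow> real^'n^'n) \<Rightarrow> nat \<Rightarrow> 'n \<Rightarrow> 'n \<Rightarrow> (real \<Rightarrow> real) \<Rightarrow> real \<Rightarrow> real" where
  "Jentry P m r c f z = (\<Sum>k\<le>m. P k $ r $ c * dz k f z)"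

definition Jop :: "(nat \<Rightarrow> real^'n^'n) \<Rightarrow> nat \<Rightarrow> (real \<Rightarrow> real^'n) \<Rightarrow> real \<Rightarrow> real^'n" where
  "Jop P m g z = (\<chi> r. \<Sum>c\<in>UNIV. Jentry P m r c (\<lambda>w. g w $ c) z)"

definition Jbb :: "(nat \<Rightarrow> real^'n^'n) \<Rightarrow> nat \<Rightarrow> ('l \<Rightarrow> 'n \<times> nat)
    \<Rightarrow> (real \<Rightarrow> real^'l) \<Rightarrow> real \<Rightarrow> real^'l" where
  "Jbb P m I f z = (\<chi> p. \<Sum>q\<in>UNIV.
      dz (snd (I p))
        (\<lambda>w. Jentry P m (fst (I p)) (fst (I q))
               (\<lambda>v. (-1) ^ snd (I q) * dz (snd (I q)) (\<lambda>u. f u $ q) v) w) z)"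

definition formally_skew_adjoint :: "real \<Rightarrow> real \<Rightarrow> ((real \<Rightarrow> real^'l) \<Rightarrow> real \<Rightarrow> real^'l) \<Rightarrow> bool" where
  "formally_skew_adjoint a b Op \<longleftrightarrow> (\<forall>e f. test_fun a b e \<longrightarrow> test_fun a b f \<longrightarrow>
      integral {a..b} (\<lambda>z. e z \<bullet> Op f z) = - integral {a..b} (\<lambda>z. Op e z \<bullet> f z))"

end

theory Submission
  imports Defs "HOL-Computational_Algebra.Polynomial"
begin

definition Dk :: "nat \<Rightarrow> (real \<Rightarrow> real) \<Rightarrow> bool" where
  "Dk k f \<longleftrightarrow> (\<forall>i\<le>k. \<forall>x. (deriv ^^ i) f differentiable (at x))"

definition Cinf :: "(real \<Rightarrow> real) \<Rightarrow> bool" where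
  "Cinf f \<longleftrightarrow> (\<forall>k x. (deriv ^^ k) f differentiable (at x))"

lemma funpow_deriv_Suc: "(deriv ^^ Suc i) f = (deriv ^^ i) (deriv f)"
  by (metis comp_apply funpow_Suc_right)

lemma Dk_0: "Dk 0 f \<longleftrightarrow> (\<forall>x. f differentiable (at x))"
  by (simp add: Dk_def)

lemma Dk_Suc: "Dk (Suc k) f \<longleftrightarrow> (\<forall>x. f differentiable (at x)) \<and> Dk k (deriv f)"
proof
  assume H: "Dk (Suc k) f"
  have "f differentiable (at x)" for x using H unfolding Dk_def
    by (metis funpow_0 le0)
  moreover have "(deriv ^^ i) (deriv f) differentiable (at x)" if "i \<le> k" for i x
  proof -
    have "Suc i \<le> Suc k" using that by simp
    then have "(deriv ^^ Suc i) f differentiable (at x)" using H unfolding Dk_def by blast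
    then show ?thesis by (simp only: funpow_deriv_Suc)
  qed
  ultimately show "(\<forall>x. f differentiable (at x)) \<and> Dk k (deriv f)" unfolding Dk_def by blast
next
  assume H: "(\<forall>x. f differentiable (at x)) \<and> Dk k (deriv f)"
  show "Dk (Suc k) f" unfolding Dk_def
  proof (intro allI impI)
    fix i x assume i: "i \<le> Suc k"
    show "(deriv ^^ i) f differentiable (at x)"
    proof (cases i)
      case 0 then show ?thesis using H by simp
    next
      case (Suc j)
      then have "j \<le> k" using i by simp
      then have "(deriv ^^ j) (deriv f) differentiable (at x)" using H unfolding Dk_def by blast
      then show ?thesis using Suc by (simp only: funpow_deriv_Suc)
    qed
  qed
qed

lemma Cinf_Dk: "Cinf f \<longleftrightarrow> (\<forall>k. Dk k f)"
  unfolding Cinf_def Dk_def by blast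

lemma Dk_mono: "Dk k f \<Longrightarrow> i \<le> k \<Longrightarrow> Dk i f"
  unfolding Dk_def by auto

lemma Cinf_deriv: "Cinf f \<Longrightarrow> Cinf (deriv f)"
  unfolding Cinf_Dk using Dk_Suc by blast

lemma Cinf_iff: "Cinf f \<longleftrightarrow> (\<forall>x. f differentiable (at x)) \<and> Cinf (deriv f)"
proof
  assume "Cinf f" then show "(\<forall>x. f differentiable (at x)) \<and> Cinf (deriv f)"
    unfolding Cinf_Dk using Dk_Suc by blast
next
  assume H: "(\<forall>x. f differentiable (at x)) \<and> Cinf (deriv f)"
  show "Cinf f" unfolding Cinf_Dk
  proof
    fix k show "Dk k f" using H by (cases k) (auto simp: Dk_0 Dk_Suc Cinf_Dk)
  qed
qed

lemma Cinf_diff: "Cinf f \<Longrightarrow> f differentiable (at x)"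
  using Cinf_iff by blast

lemma Cinf_DERIV: "Cinf f \<Longrightarrow> (f has_real_derivative deriv f x) (at x)"
  using Cinf_diff DERIV_deriv_iff_real_differentiable by blast

lemma Dk_DERIV: "Dk k f \<Longrightarrow> (f has_real_derivative deriv f x) (at x)"
  by (metis DERIV_deriv_iff_real_differentiable Dk_0 Dk_mono le0)

lemma deriv_add_fun:
  fixes f g :: "real \<Rightarrow> real"
  assumes "\<And>x. f differentiable (at x)" "\<And>x. g differentiable (at x)"
  shows "deriv (\<lambda>x. f x + g x) = (\<lambda>x. deriv f x + deriv g x)"
proof
  fix x
  have "(f has_real_derivative deriv f x) (at x)" "(g has_real_derivative deriv g x) (at x)"
    using assms by (simp_all add: DERIV_deriv_iff_real_differentiable)
  then show "deriv (\<lambda>x. f x + g x) x = deriv f x + deriv g x"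
    by (intro DERIV_imp_deriv derivative_eq_intros) auto
qed

lemma deriv_mult_fun:
  fixes f g :: "real \<Rightarrow> real"
  assumes "\<And>x. f differentiable (at x)" "\<And>x. g differentiable (at x)"
  shows "deriv (\<lambda>x. f x * g x) = (\<lambda>x. deriv f x * g x + f x * deriv g x)"
proof
  fix x
  have "(f has_real_derivative deriv f x) (at x)" "(g has_real_derivative deriv g x) (at x)"
    using assms by (simp_all add: DERIV_deriv_iff_real_differentiable)
  then show "deriv (\<lambda>x. f x * g x) x = deriv f x * g x + f x * deriv g x"
    by (intro DERIV_imp_deriv derivative_eq_intros) auto
qed

lemma Dk_add: "Dk k f \<Longrightarrow> Dk k g \<Longrightarrow> Dk k (\<lambda>x. f x + g x)"
proof (induction k arbitrary: f g)
  case 0 then show ?case by (auto simp: Dk_0)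
next
  case (Suc k)
  then have d: "\<And>x. f differentiable (at x)" "\<And>x. g differentiable (at x)"
    and "Dk k (deriv f)" "Dk k (deriv g)" by (auto simp: Dk_Suc)
  then show ?case using Suc.IH by (auto simp: Dk_Suc deriv_add_fun)
qed

lemma Dk_mult: "Dk k f \<Longrightarrow> Dk k g \<Longrightarrow> Dk k (\<lambda>x. f x * g x)"
proof (induction k arbitrary: f g)
  case 0 then show ?case by (auto simp: Dk_0)
next
  case (Suc k)
  then have d: "\<And>x. f differentiable (at x)" "\<And>x. g differentiable (at x)"
    and "Dk k (deriv f)" "Dk k (deriv g)" by (auto simp: Dk_Suc)
  moreover have "Dk k f" "Dk k g" using Suc.prems Dk_mono le_SucI by blast+
  ultimately show ?case using Suc.IH by (auto simp: Dk_Suc deriv_mult_fun intro!: Dk_add)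
qed

lemma Dk_const: "Dk k (\<lambda>x. c)"
  by (induction k arbitrary: c) (auto simp: Dk_Suc Dk_0)

lemma Dk_id: "Dk k (\<lambda>x. x)"
proof -
  have "deriv (\<lambda>x. x) = (\<lambda>x. 1::real)" by (auto intro!: DERIV_imp_deriv derivative_eq_intros)
  then show ?thesis by (cases k) (auto simp: Dk_Suc Dk_0 Dk_const)
qed

lemma Dk_sum: "finite S \<Longrightarrow> (\<And>i. i \<in> S \<Longrightarrow> Dk k (f i)) \<Longrightarrow> Dk k (\<lambda>x. \<Sum>i\<in>S. f i x)"
proof (induction S rule: finite_induct)
  case empty then show ?case by (simp add: Dk_const)
next
  case (insert a S)
  have "Dk k (\<lambda>x. f a x + (\<Sum>i\<in>S. f i x))"
    by (rule Dk_add) (use insert in auto)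
  then show ?case using insert by simp
qed

lemma Cinf_add: "Cinf f \<Longrightarrow> Cinf g \<Longrightarrow> Cinf (\<lambda>x. f x + g x)"
  by (simp add: Cinf_Dk Dk_add)
lemma Cinf_mult: "Cinf f \<Longrightarrow> Cinf g \<Longrightarrow> Cinf (\<lambda>x. f x * g x)"
  by (simp add: Cinf_Dk Dk_mult)
lemma Cinf_const: "Cinf (\<lambda>x. c)"
  by (simp add: Cinf_Dk Dk_const)
lemma Cinf_id: "Cinf (\<lambda>x. x)"
  by (simp add: Cinf_Dk Dk_id)
lemma Cinf_sum: "finite S \<Longrightarrow> (\<And>i. i \<in> S \<Longrightarrow> Cinf (f i)) \<Longrightarrow> Cinf (\<lambda>x. \<Sum>i\<in>S. f i x)"
  by (simp add: Cinf_Dk Dk_sum)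
lemma Cinf_cmult: "Cinf f \<Longrightarrow> Cinf (\<lambda>x. c * f x)"
  by (simp add: Cinf_mult Cinf_const)
lemma Cinf_minus: "Cinf f \<Longrightarrow> Cinf g \<Longrightarrow> Cinf (\<lambda>x. f x - g x)"
  using Cinf_add[of f "\<lambda>x. (-1) * g x"] Cinf_cmult[of g "-1"] by simp

lemma Cinf_dz: "Cinf f \<Longrightarrow> Cinf (dz k f)"
  by (induction k) (auto simp: dz_def intro: Cinf_deriv)

lemma dz_Suc: "dz (Suc k) f = deriv (dz k f)"
  by (simp add: dz_def)
lemma dz_Suc': "dz (Suc k) f = dz k (deriv f)"
  unfolding dz_def by (rule funpow_deriv_Suc)
lemma dz_0[simp]: "dz 0 f = f"
  by (simp add: dz_def)
lemma dz_dz: "dz k (dz j f) = dz (k + j) f"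
  by (simp add: dz_def funpow_add)

lemma Cinf_cont: "Cinf f \<Longrightarrow> continuous_on S f"
  by (meson Cinf_diff continuous_at_imp_continuous_on differentiable_imp_continuous_within)

lemma Cinf_DERIV_dz: "Cinf f \<Longrightarrow> (dz k f has_real_derivative dz (Suc k) f x) (at x)"
  using Cinf_DERIV[OF Cinf_dz, of f k x] by (simp only: dz_Suc)

lemma dz_add: "Cinf f \<Longrightarrow> Cinf g \<Longrightarrow> dz k (\<lambda>x. f x + g x) = (\<lambda>x. dz k f x + dz k g x)"
proof (induction k)
  case 0 then show ?case by simp
next
  case (Suc k)
  have "deriv (\<lambda>x. dz k f x + dz k g x) = (\<lambda>x. deriv (dz k f) x + deriv (dz k g) x)"
    by (rule deriv_add_fun) (use Suc.prems in \<open>auto intro: Cinf_diff Cinf_dz\<close>)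
  then show ?case using Suc by (simp add: dz_Suc)
qed

lemma dz_cmult: "Cinf f \<Longrightarrow> dz k (\<lambda>x. c * f x) = (\<lambda>x. c * dz k f x)"
proof (induction k)
  case 0 then show ?case by simp
next
  case (Suc k)
  have "deriv (\<lambda>x. c * dz k f x) = (\<lambda>x. c * deriv (dz k f) x)"
    using deriv_mult_fun[of "\<lambda>x. c" "dz k f"] Suc Cinf_diff Cinf_dz by simp
  then show ?case using Suc by (simp add: dz_Suc)
qed

lemma dz_const: "dz k (\<lambda>x. c) = (\<lambda>x. if k = 0 then c else 0)"
proof (induction k)
  case (Suc k) then show ?case by (auto simp: dz_Suc)
qed simp

lemma dz_sum: "finite S \<Longrightarrow> (\<And>i. i \<in> S \<Longrightarrow> Cinf (f i)) \<Longrightarrow>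
   dz k (\<lambda>x. \<Sum>i\<in>S. f i x) = (\<lambda>x. \<Sum>i\<in>S. dz k (f i) x)"
proof (induction S rule: finite_induct)
  case empty then show ?case by (simp add: dz_const)
next
  case (insert a S)
  have "dz k (\<lambda>x. f a x + (\<Sum>i\<in>S. f i x)) = (\<lambda>x. dz k (f a) x + dz k (\<lambda>x. \<Sum>i\<in>S. f i x) x)"
    by (rule dz_add) (use insert in \<open>auto intro!: Cinf_sum\<close>)
  then show ?case using insert by simp
qed

lemma dz_local:
  assumes "open S" "\<And>x. x \<in> S \<Longrightarrow> f x = g x" "z \<in> S"
  shows "dz k f z = dz k g z"
  using assms(3)
proof (induction k arbitrary: z)
  case 0 then show ?case using assms by simp
next
  case (Suc k)
  have "eventually (\<lambda>x. x \<in> S) (nhds z)" using assms(1) Suc.prems eventually_nhds_in_open by blast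
  then have "eventually (\<lambda>x. dz k f x = dz k g x) (nhds z)"
    by (rule eventually_mono) (use Suc.IH in auto)
  then show ?case by (simp add: dz_Suc deriv_cong_ev)
qed

lemma deriv_shift: "deriv f (x + z) = deriv (\<lambda>x. f (x + z)) (x::real)"
  unfolding deriv_def using DERIV_shift[of f _ x z] by simp

lemma differentiable_shift: "((f::real\<Rightarrow>real) differentiable (at (x + z))) \<longleftrightarrow> ((\<lambda>x. f (x + z)) differentiable (at (x::real)))"
  unfolding real_differentiable_def using DERIV_shift[of f _ x z] by simp

lemma line_eq: "(y::'a::real_vector) + s *\<^sub>R b + \<sigma> *\<^sub>R b = y + (\<sigma> + s) *\<^sub>R b"
  by (simp add: algebra_simps)

lemma pder_line: "pder b G (y + s *\<^sub>R b) = deriv (\<lambda>s. G (y + s *\<^sub>R b)) s"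
proof -
  have "pder b G (y + s *\<^sub>R b) = deriv (\<lambda>\<sigma>. G (y + (\<sigma> + s) *\<^sub>R b)) 0"
    unfolding pder_def line_eq ..
  also have "\<dots> = deriv (\<lambda>s. G (y + s *\<^sub>R b)) (0 + s)"
    by (rule deriv_shift[symmetric])
  finally show ?thesis by simp
qed

lemma pder_line_fun: "deriv (\<lambda>s. G (y + s *\<^sub>R b)) = (\<lambda>s. pder b G (y + s *\<^sub>R b))"
  by (rule ext, rule pder_line[symmetric])

lemma foldr_replicate_pder: "foldr pder (replicate k b) F = (pder b ^^ k) F"
  by (induction k) auto

lemma dz_line: "dz k (\<lambda>s. F (y + s *\<^sub>R b)) = (\<lambda>s. (pder b ^^ k) F (y + s *\<^sub>R b))"
proof (induction k arbitrary: F)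
  case 0 then show ?case by simp
next
  case (Suc k)
  have "dz (Suc k) (\<lambda>s. F (y + s *\<^sub>R b)) = dz k (\<lambda>s. pder b F (y + s *\<^sub>R b))"
    by (simp only: dz_Suc' pder_line_fun)
  also have "\<dots> = (\<lambda>s. (pder b ^^ k) (pder b F) (y + s *\<^sub>R b))" by (rule Suc.IH)
  also have "\<dots> = (\<lambda>s. (pder b ^^ Suc k) F (y + s *\<^sub>R b))"
    by (metis comp_apply funpow_Suc_right)
  finally show ?case .
qed

lemma smooth_pder: "smooth F \<Longrightarrow> b \<in> Basis \<Longrightarrow> smooth (pder b F)"
  unfolding smooth_def
proof (intro allI impI)
  fix bs :: "'a list"
  assume H: "\<forall>bs. set bs \<subseteq> Basis \<longrightarrow> continuous_on UNIV (foldr pder bs F) \<and>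
      (\<forall>b\<in>Basis. \<forall>y. (\<lambda>s. foldr pder bs F (y + s *\<^sub>R b)) differentiable at 0)"
    and b: "b \<in> Basis" and bs: "set bs \<subseteq> Basis"
  have e: "foldr pder bs (pder b F) = foldr pder (bs @ [b]) F" by simp
  have "set (bs @ [b]) \<subseteq> Basis" using b bs by auto
  then show "continuous_on UNIV (foldr pder bs (pder b F)) \<and>
      (\<forall>ba\<in>Basis. \<forall>y. (\<lambda>s. foldr pder bs (pder b F) (y + s *\<^sub>R ba)) differentiable at 0)"
    unfolding e using H by blast
qed

lemma smooth_funpow_pder: "smooth F \<Longrightarrow> b \<in> Basis \<Longrightarrow> smooth ((pder b ^^ k) F)"
  by (induction k) (auto intro: smooth_pder)

lemma smooth_cont: "smooth (F::'a::euclidean_space \<Rightarrow> real) \<Longrightarrow> continuous_on UNIV F"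
proof -
  assume F: "smooth F"
  have e: "set ([]::'a list) \<subseteq> Basis" by simp
  show ?thesis using F e unfolding smooth_def by (metis foldr_Nil id_apply)
qed

lemma smooth_line_diff: "smooth (F::'a::euclidean_space \<Rightarrow> real) \<Longrightarrow> b \<in> Basis \<Longrightarrow> (\<lambda>s. F (y + s *\<^sub>R b)) differentiable (at s)"
proof -
  assume F: "smooth F" and b: "b \<in> Basis"
  have "(\<lambda>\<sigma>. foldr pder [] F ((y + s *\<^sub>R b) + \<sigma> *\<^sub>R b)) differentiable (at 0)"
  proof -
    have e: "set ([]::'a list) \<subseteq> Basis" by simp
    show ?thesis using F b e unfolding smooth_def by (metis foldr_Nil id_apply)
  qed
  then have "(\<lambda>\<sigma>. F (y + (\<sigma> + s) *\<^sub>R b)) differentiable (at 0)" by (simp add: line_eq)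
  then have "(\<lambda>s. F (y + s *\<^sub>R b)) differentiable (at (0 + s))"
    using differentiable_shift[of "\<lambda>s. F (y + s *\<^sub>R b)" 0 s] by simp
  then show ?thesis by simp
qed

lemma Cinf_line: "smooth F \<Longrightarrow> b \<in> Basis \<Longrightarrow> Cinf (\<lambda>s. F (y + s *\<^sub>R b))"
  unfolding Cinf_def
proof (intro allI)
  fix k s assume F: "smooth F" and b: "b \<in> Basis"
  have "(deriv ^^ k) (\<lambda>s. F (y + s *\<^sub>R b)) = (\<lambda>s. (pder b ^^ k) F (y + s *\<^sub>R b))"
    using dz_line[of k F y b] by (simp add: dz_def)
  then show "(deriv ^^ k) (\<lambda>s. F (y + s *\<^sub>R b)) differentiable at s"
    using smooth_line_diff[OF smooth_funpow_pder[OF F b] b] by simp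
qed

lemma replicate_of_subset: "set bs \<subseteq> {c} \<Longrightarrow> bs = replicate (length bs) c"
  by (induction bs) auto

lemma smooth_real_Cinf: "smooth (f :: real \<Rightarrow> real) \<Longrightarrow> Cinf f"
  using Cinf_line[of f 1 0] by (simp add: Basis_real_def)

lemma pder_real_dz: "(pder (1::real) ^^ k) f = dz k f"
  using dz_line[of k f 0 1] by simp

lemma Cinf_smooth_real: "Cinf (f :: real \<Rightarrow> real) \<Longrightarrow> smooth f"
  unfolding smooth_def
proof (intro allI impI)
  fix bs :: "real list" assume f: "Cinf f" and bs: "set bs \<subseteq> Basis"
  then have "bs = replicate (length bs) 1" using replicate_of_subset by (simp add: Basis_real_def)
  then have e: "foldr pder bs f = dz (length bs) f"
    by (metis foldr_replicate_pder pder_real_dz)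
  have "(\<lambda>s. dz (length bs) f (y + s *\<^sub>R b)) differentiable (at 0)" if "b \<in> Basis" for b y
  proof -
    have "b = 1" using that by (simp add: Basis_real_def)
    have "dz (length bs) f differentiable (at (0 + y))" using Cinf_diff[OF Cinf_dz[OF f]] by blast
    then have "(\<lambda>s. dz (length bs) f (s + y)) differentiable (at 0)"
      using differentiable_shift by blast
    then show ?thesis using \<open>b = 1\<close> by (simp add: add.commute)
  qed
  then show "continuous_on UNIV (foldr pder bs f) \<and>
         (\<forall>b\<in>Basis. \<forall>y. (\<lambda>s. foldr pder bs f (y + s *\<^sub>R b)) differentiable at 0)"
    unfolding e using Cinf_cont[OF Cinf_dz[OF f]] by blast
qed

lemma smooth_real_iff: "smooth (f :: real \<Rightarrow> real) \<longleftrightarrow> Cinf f"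
  using Cinf_smooth_real smooth_real_Cinf by blast

definition Pvec :: "'n set \<Rightarrow> real^'n \<Rightarrow> real^'n" where
  "Pvec S h = (\<chi> i. if i \<in> S then h $ i else 0)"

lemma axis1_Basis: "axis r (1::real) \<in> Basis"
  by (simp add: Basis_real_def)

lemma frechet_bound_step:
  fixes F :: "real^'n \<Rightarrow> real"
  assumes F: "smooth F" and fin: "finite S"
    and hyp: "\<And>\<xi> r. norm (\<xi> - y) < \<delta> \<Longrightarrow> \<bar>pder (axis r 1) F \<xi> - c r\<bar> \<le> \<epsilon>"
    and h: "(\<Sum>i\<in>UNIV. \<bar>h $ i\<bar>) < \<delta>"
  shows "\<bar>F (y + Pvec S h) - F y - (\<Sum>r\<in>S. h $ r * c r)\<bar> \<le> (\<Sum>r\<in>S. \<bar>h $ r\<bar>) * \<epsilon>"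
  using fin
proof (induction S rule: finite_induct)
  case empty
  have "Pvec {} h = 0" by (simp add: Pvec_def vec_eq_iff)
  then show ?case by simp
next
  case (insert a S)
  define w where "w = y + Pvec S h"
  define \<psi> where "\<psi> s = F (w + s *\<^sub>R axis a 1) - s * c a" for s
  have P: "Pvec (insert a S) h = Pvec S h + h $ a *\<^sub>R axis a 1"
    using insert.hyps by (auto simp: Pvec_def vec_eq_iff axis_def)
  have D: "(\<psi> has_real_derivative (pder (axis a 1) F (w + s *\<^sub>R axis a 1) - c a)) (at s)" for s
  proof -
    have "(\<lambda>s. F (w + s *\<^sub>R axis a 1)) differentiable (at s)"
      by (rule smooth_line_diff[OF F axis1_Basis])
    then have "((\<lambda>s. F (w + s *\<^sub>R axis a 1)) has_real_derivative
        deriv (\<lambda>s. F (w + s *\<^sub>R axis a 1)) s) (at s)"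
      by (simp add: DERIV_deriv_iff_real_differentiable)
    then have "((\<lambda>s. F (w + s *\<^sub>R axis a 1)) has_real_derivative
        pder (axis a 1) F (w + s *\<^sub>R axis a 1)) (at s)"
      by (simp add: pder_line)
    then show ?thesis unfolding \<psi>_def
      by (auto intro!: derivative_eq_intros)
  qed
  have B: "\<bar>pder (axis a 1) F (w + s *\<^sub>R axis a 1) - c a\<bar> \<le> \<epsilon>"
    if s: "s \<in> closed_segment 0 (h $ a)" for s
  proof (rule hyp)
    have sa: "\<bar>s\<bar> \<le> \<bar>h $ a\<bar>" using s by (auto simp: closed_segment_eq_real_ivl split: if_splits)
    have "norm (w + s *\<^sub>R axis a 1 - y) = norm (Pvec S h + s *\<^sub>R axis a 1)"
      by (simp add: w_def)
    also have "\<dots> \<le> (\<Sum>i\<in>UNIV. \<bar>(Pvec S h + s *\<^sub>R axis a 1) $ i\<bar>)"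
      by (rule norm_le_l1_cart)
    also have "\<dots> \<le> (\<Sum>i\<in>UNIV. \<bar>h $ i\<bar>)"
    proof (rule sum_mono)
      fix i show "\<bar>(Pvec S h + s *\<^sub>R axis a 1) $ i\<bar> \<le> \<bar>h $ i\<bar>"
        using insert.hyps sa by (auto simp: Pvec_def axis_def)
    qed
    finally show "norm (w + s *\<^sub>R axis a 1 - y) < \<delta>" using h by simp
  qed
  have "norm (\<psi> (h $ a) - \<psi> 0) \<le> \<epsilon> * norm (h $ a - 0)"
    by (rule field_differentiable_bound[of "closed_segment 0 (h $ a)" \<psi>
          "\<lambda>s. pder (axis a 1) F (w + s *\<^sub>R axis a 1) - c a"])
       (use D B in \<open>auto intro: has_field_derivative_at_within\<close>)
  then have 1: "\<bar>F (w + h $ a *\<^sub>R axis a 1) - F w - h $ a * c a\<bar> \<le> \<bar>h $ a\<bar> * \<epsilon>"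
    by (simp add: \<psi>_def mult.commute)
  have 2: "\<bar>F w - F y - (\<Sum>r\<in>S. h $ r * c r)\<bar> \<le> (\<Sum>r\<in>S. \<bar>h $ r\<bar>) * \<epsilon>"
    using insert.IH w_def by simp
  have "y + Pvec (insert a S) h = w + h $ a *\<^sub>R axis a 1"
    by (simp add: P w_def add.assoc)
  then show ?case using insert.hyps 1 2
    by (simp add: distrib_right)
qed

lemma frechet:
  fixes F :: "real^'n \<Rightarrow> real"
  assumes F: "smooth F"
  shows "(F has_derivative (\<lambda>h. \<Sum>r\<in>UNIV. h $ r * pder (axis r 1) F y)) (at y)"
  unfolding has_derivative_at_alt
proof (intro conjI allI impI)
  show "bounded_linear (\<lambda>h. \<Sum>r\<in>UNIV. h $ r * pder (axis r 1) F y)"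
    by (intro bounded_linear_sum bounded_linear_mult_const bounded_linear_vec_nth)
next
  fix e :: real assume e: "e > 0"
  define c where "c r = pder (axis r 1) F y" for r
  define \<Phi> where "\<Phi> \<xi> = (\<Sum>r\<in>UNIV. \<bar>pder (axis r 1) F \<xi> - c r\<bar>)" for \<xi>
  have cont: "continuous_on UNIV (pder (axis r 1) F)" for r
    by (rule smooth_cont, rule smooth_pder[OF F axis1_Basis])
  have "continuous_on UNIV \<Phi>" unfolding \<Phi>_def
    by (intro continuous_intros cont)
  then have "isCont \<Phi> y" by (simp add: continuous_on_eq_continuous_at)
  moreover have "\<Phi> y = 0" by (simp add: \<Phi>_def c_def)
  moreover define \<epsilon> where "\<epsilon> = e / real CARD('n)"
  moreover have \<epsilon>: "\<epsilon> > 0" using e by (simp add: \<epsilon>_def)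
  ultimately obtain \<delta> where \<delta>: "\<delta> > 0" "\<And>\<xi>. dist \<xi> y < \<delta> \<Longrightarrow> dist (\<Phi> \<xi>) 0 < \<epsilon>"
    unfolding continuous_at_eps_delta by metis
  have hyp: "\<bar>pder (axis r 1) F \<xi> - c r\<bar> \<le> \<epsilon>" if "norm (\<xi> - y) < \<delta>" for \<xi> r
  proof -
    have "\<bar>pder (axis r 1) F \<xi> - c r\<bar> \<le> \<Phi> \<xi>" unfolding \<Phi>_def
      by (rule member_le_sum) auto
    also have "\<Phi> \<xi> < \<epsilon>" using \<delta>(2)[of \<xi>] that by (simp add: dist_norm)
    finally show ?thesis by simp
  qed
  show "\<exists>d>0. \<forall>y'. norm (y' - y) < d \<longrightarrow>
     norm (F y' - F y - (\<Sum>r\<in>UNIV. (y' - y) $ r * pder (axis r 1) F y)) \<le> e * norm (y' - y)"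
  proof (intro exI conjI allI impI)
    show "\<delta> / real CARD('n) > 0" using \<delta> by simp
    fix y' assume y': "norm (y' - y) < \<delta> / real CARD('n)"
    define h where "h = y' - y"
    have l1: "(\<Sum>i\<in>UNIV. \<bar>h $ i\<bar>) \<le> real CARD('n) * norm h"
      using sum_bounded_above[of UNIV "\<lambda>i. \<bar>h $ i\<bar>" "norm h"] component_le_norm_cart by auto
    also have "\<dots> < \<delta>" using y' by (simp add: h_def field_simps)
    finally have hd: "(\<Sum>i\<in>UNIV. \<bar>h $ i\<bar>) < \<delta>" .
    have "Pvec UNIV h = h" by (simp add: Pvec_def)
    then have "\<bar>F (y + h) - F y - (\<Sum>r\<in>UNIV. h $ r * c r)\<bar> \<le> (\<Sum>r\<in>UNIV. \<bar>h $ r\<bar>) * \<epsilon>"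
      using frechet_bound_step[OF F finite_class.finite_UNIV hyp hd] by simp
    also have "\<dots> \<le> (real CARD('n) * norm h) * \<epsilon>"
      using l1 \<epsilon> by (simp add: mult_right_mono)
    also have "\<dots> = e * norm h" by (simp add: \<epsilon>_def)
    finally show "norm (F y' - F y - (\<Sum>r\<in>UNIV. (y' - y) $ r * pder (axis r 1) F y)) \<le> e * norm (y' - y)"
      by (simp add: h_def c_def)
  qed
qed

lemma vec_lambda_has_derivative:
  fixes \<gamma> :: "'n::finite \<Rightarrow> real \<Rightarrow> real"
  assumes "\<And>r. (\<gamma> r has_real_derivative \<gamma>' r) (at z)"
  shows "((\<lambda>z. \<chi> r. \<gamma> r z) has_derivative (\<lambda>d. \<chi> r. \<gamma>' r * d)) (at z)"
  apply (subst has_derivative_componentwise_within)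
proof
  fix b :: "real^'n" assume "b \<in> Basis"
  then obtain i u where u: "u \<in> (Basis::real set)" "b = axis i u" unfolding Basis_vec_def by blast
  then have b: "b = axis i 1" by (simp add: Basis_real_def)
  have "((\<lambda>x. \<gamma> i x) has_derivative (\<lambda>x. \<gamma>' i * x)) (at z)"
    using assms[of i] by (simp add: has_field_derivative_def)
  show "((\<lambda>x. (\<chi> r. \<gamma> r x) \<bullet> b) has_derivative (\<lambda>x. (\<chi> r. \<gamma>' r * x) \<bullet> b)) (at z)"
    using \<open>((\<lambda>x. \<gamma> i x) has_derivative (\<lambda>x. \<gamma>' i * x)) (at z)\<close> unfolding b inner_axis by simp
qed

lemma chain_vec:
  fixes F :: "real^'n \<Rightarrow> real"
  assumes F: "smooth F" and g: "\<And>r. (\<gamma> r has_real_derivative \<gamma>' r) (at z)"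
  shows "((\<lambda>z. F (\<chi> r. \<gamma> r z)) has_real_derivative
           (\<Sum>r\<in>UNIV. \<gamma>' r * pder (axis r 1) F (\<chi> r. \<gamma> r z))) (at z)"
proof -
  have "((F \<circ> (\<lambda>z. \<chi> r. \<gamma> r z)) has_derivative
     ((\<lambda>h. \<Sum>r\<in>UNIV. h $ r * pder (axis r 1) F (\<chi> r. \<gamma> r z)) \<circ> (\<lambda>d. \<chi> r. \<gamma>' r * d))) (at z)"
    by (rule diff_chain_at[OF vec_lambda_has_derivative[OF g] frechet[OF F]])
  moreover have "((\<lambda>h. \<Sum>r\<in>UNIV. h $ r * pder (axis r 1) F (\<chi> r. \<gamma> r z)) \<circ> (\<lambda>d. \<chi> r. \<gamma>' r * d))
      = (*) (\<Sum>r\<in>UNIV. \<gamma>' r * pder (axis r 1) F (\<chi> r. \<gamma> r z))"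
    by (auto simp: fun_eq_iff sum_distrib_left sum_distrib_right mult_ac)
  ultimately show ?thesis by (simp add: has_field_derivative_def o_def)
qed

lemma Dk_chain:
  fixes F :: "real^'n \<Rightarrow> real"
  assumes g: "\<And>r. Cinf (\<gamma> r)"
  shows "smooth F \<Longrightarrow> Dk k (\<lambda>z. F (\<chi> r. \<gamma> r z))"
proof (induction k arbitrary: F)
  have gd: "\<And>r x. (\<gamma> r has_real_derivative deriv (\<gamma> r) x) (at x)" using Cinf_DERIV g by blast
  case 0
  show ?case unfolding Dk_0
  proof
    fix x show "(\<lambda>z. F (\<chi> r. \<gamma> r z)) differentiable (at x)"
      using chain_vec[where \<gamma>=\<gamma> and \<gamma>'="\<lambda>r. deriv (\<gamma> r) x" and z=x, OF 0 gd]
        real_differentiable_def by blast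
  qed
next
  case (Suc k)
  have gd: "\<And>r x. (\<gamma> r has_real_derivative deriv (\<gamma> r) x) (at x)" using Cinf_DERIV g by blast
  have der: "deriv (\<lambda>z. F (\<chi> r. \<gamma> r z)) =
      (\<lambda>z. \<Sum>r\<in>UNIV. deriv (\<gamma> r) z * pder (axis r 1) F (\<chi> r. \<gamma> r z))"
  proof
    fix x show "deriv (\<lambda>z. F (\<chi> r. \<gamma> r z)) x = (\<Sum>r\<in>UNIV. deriv (\<gamma> r) x * pder (axis r 1) F (\<chi> r. \<gamma> r x))"
      using chain_vec[where \<gamma>=\<gamma> and \<gamma>'="\<lambda>r. deriv (\<gamma> r) x" and z=x, OF Suc.prems gd]
      by (rule DERIV_imp_deriv)
  qed
  have "Dk k (\<lambda>z. \<Sum>r\<in>UNIV. deriv (\<gamma> r) z * pder (axis r 1) F (\<chi> r. \<gamma> r z))"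
  proof (rule Dk_sum[OF finite_class.finite_UNIV], rule Dk_mult)
    fix r
    show "Dk k (deriv (\<gamma> r))" using Cinf_deriv[OF g] Cinf_Dk by blast
    show "Dk k (\<lambda>z. pder (axis r 1) F (\<chi> r. \<gamma> r z))"
      by (rule Suc.IH, rule smooth_pder[OF Suc.prems axis1_Basis])
  qed
  moreover have "\<forall>x. (\<lambda>z. F (\<chi> r. \<gamma> r z)) differentiable (at x)"
  proof
    fix x show "(\<lambda>z. F (\<chi> r. \<gamma> r z)) differentiable (at x)"
      using chain_vec[where \<gamma>=\<gamma> and \<gamma>'="\<lambda>r. deriv (\<gamma> r) x" and z=x, OF Suc.prems gd]
        real_differentiable_def by blast
  qed
  ultimately show ?case unfolding Dk_Suc der by blast
qed

lemma Cinf_chain: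
  fixes F :: "real^'n \<Rightarrow> real"
  assumes "\<And>r. Cinf (\<gamma> r)" "smooth F"
  shows "Cinf (\<lambda>z. F (\<chi> r. \<gamma> r z))"
  unfolding Cinf_Dk
proof
  fix k show "Dk k (\<lambda>z. F (\<chi> r. \<gamma> r z))"
    by (rule Dk_chain) (use assms in auto)
qed

lemma Dk_comp: "Cinf g \<Longrightarrow> Cinf f \<Longrightarrow> Dk k (\<lambda>x. f (g x))"
proof (induction k arbitrary: f)
  case 0
  show ?case unfolding Dk_0
  proof
    fix x
    have "((\<lambda>x. f (g x)) has_real_derivative deriv f (g x) * deriv g x) (at x)"
      by (rule DERIV_chain2[OF Cinf_DERIV[OF 0(2)] Cinf_DERIV[OF 0(1)]])
    then show "(\<lambda>x. f (g x)) differentiable (at x)" using real_differentiable_def by blast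
  qed
next
  case (Suc k)
  have d: "((\<lambda>x. f (g x)) has_real_derivative deriv f (g x) * deriv g x) (at x)" for x
    by (rule DERIV_chain2[OF Cinf_DERIV[OF Suc.prems(2)] Cinf_DERIV[OF Suc.prems(1)]])
  then have der: "deriv (\<lambda>x. f (g x)) = (\<lambda>x. deriv f (g x) * deriv g x)"
    using DERIV_imp_deriv by blast
  have "Dk k (\<lambda>x. deriv f (g x) * deriv g x)"
  proof (rule Dk_mult)
    show "Dk k (\<lambda>x. deriv f (g x))" by (rule Suc.IH[OF Suc.prems(1) Cinf_deriv[OF Suc.prems(2)]])
    show "Dk k (deriv g)" using Cinf_deriv[OF Suc.prems(1)] Cinf_Dk by blast
  qed
  then show ?case unfolding Dk_Suc der using d real_differentiable_def by blast
qed

lemma Cinf_comp: "Cinf g \<Longrightarrow> Cinf f \<Longrightarrow> Cinf (\<lambda>x. f (g x))"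
  using Dk_comp Cinf_Dk by blast

primrec pp :: "nat \<Rightarrow> real poly" where
  "pp 0 = 1"
| "pp (Suc k) = [:0,0,1:] * (pp k - pderiv (pp k))"

definition psik :: "nat \<Rightarrow> real \<Rightarrow> real" where
  "psik k x = (if x > 0 then poly (pp k) (inverse x) * exp (- inverse x) else 0)"

lemma lim_poly_exp: fixes q :: "real poly" shows "((\<lambda>u. poly q u * exp (- u)) \<longlongrightarrow> 0) at_top"
proof -
  have e: "poly q u * exp (- u) = (\<Sum>i\<le>degree q. coeff q i * (u ^ i / exp u))" for u :: real
    by (simp add: poly_altdef exp_minus sum_distrib_right sum_divide_distrib divide_inverse mult.assoc)
  have "((\<lambda>u. \<Sum>i\<le>degree q. coeff q i * (u ^ i / exp u)) \<longlongrightarrow> (\<Sum>i\<le>degree q. coeff q i * 0)) at_top"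
    by (intro tendsto_sum tendsto_mult_left tendsto_power_div_exp_0)
  then show ?thesis unfolding e by simp
qed

lemma lim_right: fixes q :: "real poly" shows "((\<lambda>x. poly q (inverse x) * exp (- inverse x)) \<longlongrightarrow> 0) (at_right (0::real))"
  using filterlim_compose[OF lim_poly_exp filterlim_inverse_at_top_right] by simp

lemma psik_DERIV: "(psik k has_real_derivative psik (Suc k) x) (at x)"
proof -
  consider "x > 0" | "x < 0" | "x = 0" by linarith
  then show ?thesis
  proof cases
    case 1
    define p where "p = pp k"
    have d1: "((\<lambda>x. inverse x) has_real_derivative - (inverse x ^ Suc (Suc 0))) (at x)"
      using 1 by (intro DERIV_inverse) simp
    have d2: "((\<lambda>x. poly p (inverse x)) has_real_derivative
        poly (pderiv p) (inverse x) * (- (inverse x ^ Suc (Suc 0)))) (at x)"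
      by (rule DERIV_chain2[OF poly_DERIV d1])
    have d3: "((\<lambda>x. exp (- inverse x)) has_real_derivative
        exp (- inverse x) * (- (- (inverse x ^ Suc (Suc 0))))) (at x)"
      by (rule DERIV_chain2[OF DERIV_exp]) (rule DERIV_minus[OF d1])
    have d4: "((\<lambda>x. poly p (inverse x) * exp (- inverse x)) has_real_derivative
        poly (pderiv p) (inverse x) * (- (inverse x ^ Suc (Suc 0))) * exp (- inverse x) +
        poly p (inverse x) * (exp (- inverse x) * (- (- (inverse x ^ Suc (Suc 0)))))) (at x)"
      by (rule DERIV_cong[OF DERIV_mult[OF d2 d3]]) (simp add: algebra_simps)
    have eq: "poly (pderiv p) (inverse x) * (- (inverse x ^ Suc (Suc 0))) * exp (- inverse x) +
        poly p (inverse x) * (exp (- inverse x) * (- (- (inverse x ^ Suc (Suc 0)))))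
        = psik (Suc k) x"
      using 1 by (simp add: psik_def p_def poly_pCons algebra_simps power2_eq_square)
    show ?thesis
      by (rule has_field_derivative_transform_within_open[OF d4[unfolded eq], of "{0<..}"])
         (use 1 in \<open>auto simp: psik_def p_def\<close>)
  next
    case 2
    have "((\<lambda>x. 0) has_real_derivative 0) (at x)" by simp
    then have "(psik k has_real_derivative 0) (at x)"
      by (rule has_field_derivative_transform_within_open[of _ _ _ "{..<0}"])
         (use 2 in \<open>auto simp: psik_def\<close>)
    then show ?thesis using 2 by (simp add: psik_def)
  next
    case 3
    have "((\<lambda>h. (psik k (0 + h) - psik k 0) / h) \<longlongrightarrow> 0) (at 0)"
    proof (rule filterlim_split_at)
      show "((\<lambda>h. (psik k (0 + h) - psik k 0) / h) \<longlongrightarrow> 0) (at_left 0)"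
      proof (rule Lim_transform_eventually[OF tendsto_const])
        show "\<forall>\<^sub>F h in at_left 0. 0 = (psik k (0 + h) - psik k 0) / h"
          using eventually_at_left_real[of "-1" 0] by (rule eventually_mono) (auto simp: psik_def)
      qed
      show "((\<lambda>h. (psik k (0 + h) - psik k 0) / h) \<longlongrightarrow> 0) (at_right 0)"
      proof (rule Lim_transform_eventually[OF lim_right[of "[:0,1:] * pp k"]])
        show "\<forall>\<^sub>F h in at_right 0. poly ([:0, 1:] * pp k) (inverse h) * exp (- inverse h) =
            (psik k (0 + h) - psik k 0) / h"
          using eventually_at_right_less[of "0::real"] by (rule eventually_mono)
            (auto simp: psik_def field_simps)
      qed
    qed
    then have "(psik k has_real_derivative 0) (at 0)" by (simp add: DERIV_def)
    then show ?thesis using 3 by (simp add: psik_def)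
  qed
qed

lemma dz_psik: "dz k (psik 0) = psik k"
proof (induction k)
  case (Suc k)
  show ?case unfolding dz_Suc Suc
  proof
    fix x show "deriv (psik k) x = psik (Suc k) x" by (rule DERIV_imp_deriv[OF psik_DERIV])
  qed
qed simp

lemma Cinf_psik: "Cinf (psik 0)"
  unfolding Cinf_def
proof (intro allI)
  fix k x
  have "(deriv ^^ k) (psik 0) = psik k" using dz_psik by (simp add: dz_def)
  then show "(deriv ^^ k) (psik 0) differentiable (at x)"
    using psik_DERIV real_differentiable_def by metis
qed

lemma psik0_pos: "x > 0 \<Longrightarrow> psik 0 x > 0" and psik0_nonneg: "psik 0 x \<ge> 0"
  and psik0_zero: "x \<le> 0 \<Longrightarrow> psik 0 x = 0"
  by (auto simp: psik_def)

definition bump :: "real \<Rightarrow> real \<Rightarrow> real \<Rightarrow> real" where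
  "bump z0 \<delta> z = psik 0 (\<delta>\<^sup>2 - (z - z0)\<^sup>2)"

lemma Cinf_bump: "Cinf (bump z0 \<delta>)"
proof -
  have "Cinf (\<lambda>z. \<delta>\<^sup>2 - (z - z0) * (z - z0))"
    by (intro Cinf_minus Cinf_mult Cinf_const Cinf_id)
  then have "Cinf (\<lambda>z. \<delta>\<^sup>2 - (z - z0)\<^sup>2)" by (simp add: power2_eq_square)
  then show ?thesis unfolding bump_def[abs_def] by (rule Cinf_comp[OF _ Cinf_psik])
qed

lemma fundamental:
  fixes h :: "real \<Rightarrow> real"
  assumes cont: "continuous_on UNIV h" and z0: "a < z0" "z0 < b"
    and H: "\<And>\<phi> c d. Cinf \<phi> \<Longrightarrow> a < c \<Longrightarrow> c \<le> d \<Longrightarrow> d < b \<Longrightarrow> (\<And>z. z \<notin> {c..d} \<Longrightarrow> \<phi> z = 0)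
       \<Longrightarrow> integral {a..b} (\<lambda>z. h z * \<phi> z) = 0"
  shows "h z0 = 0"
proof (rule ccontr)
  assume nz: "h z0 \<noteq> 0"
  then have pos: "\<bar>h z0\<bar> > 0" by simp
  have "isCont h z0" using cont by (simp add: continuous_on_eq_continuous_at)
  then obtain \<delta>0 where \<delta>0: "\<delta>0 > 0" "\<And>z. dist z z0 < \<delta>0 \<Longrightarrow> dist (h z) (h z0) < \<bar>h z0\<bar>"
    unfolding continuous_at_eps_delta using pos by metis
  define \<delta> where "\<delta> = min \<delta>0 (min (z0 - a) (b - z0)) / 2"
  have \<delta>: "\<delta> > 0" "\<delta> < \<delta>0" "a < z0 - \<delta>" "z0 + \<delta> < b"
  proof -
    define m where "m = min \<delta>0 (min (z0 - a) (b - z0))"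
    have "m \<le> \<delta>0" "m \<le> z0 - a" "m \<le> b - z0" "m > 0" using \<delta>0 z0 by (auto simp: m_def)
    then show "\<delta> > 0" "\<delta> < \<delta>0" "a < z0 - \<delta>" "z0 + \<delta> < b" unfolding \<delta>_def m_def[symmetric] by linarith+
  qed
  have hpos: "h z0 * h z > 0" if "\<bar>z - z0\<bar> < \<delta>" for z
  proof -
    have "\<bar>h z - h z0\<bar> < \<bar>h z0\<bar>" using \<delta>0(2)[of z] that \<delta> by (simp add: dist_real_def)
    then show ?thesis
      by (cases "h z0 > 0") (auto simp: abs_if zero_less_mult_iff split: if_splits)
  qed
  define \<phi> where "\<phi> = bump z0 \<delta>"
  have supp0: "\<phi> z = 0" if "\<bar>z - z0\<bar> \<ge> \<delta>" for z
  proof -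
    have "\<bar>\<delta>\<bar> \<le> \<bar>z - z0\<bar>" using \<delta>(1) that by simp
    then have "\<delta>\<^sup>2 \<le> (z - z0)\<^sup>2" by (simp only: abs_le_square_iff)
    then show ?thesis by (simp add: \<phi>_def bump_def psik0_zero)
  qed
  have supp: "\<phi> z = 0" if "z \<notin> {z0 - \<delta>..z0 + \<delta>}" for z
    using that by (intro supp0) auto
  have "integral {a..b} (\<lambda>z. h z * \<phi> z) = 0"
    by (rule H[OF _ _ _ _ supp]) (use \<delta> in \<open>auto simp: \<phi>_def Cinf_bump\<close>)
  then have I0: "integral {a..b} (\<lambda>z. h z0 * (h z * \<phi> z)) = 0" by simp
  have cphi: "continuous_on UNIV \<phi>" unfolding \<phi>_def by (rule Cinf_cont[OF Cinf_bump])
  have cf: "continuous_on {a..b} (\<lambda>z. h z0 * (h z * \<phi> z))"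
    by (intro continuous_intros continuous_on_subset[OF cont] continuous_on_subset[OF cphi]) auto
  have "((\<lambda>z. h z0 * (h z * \<phi> z)) has_integral 0) {a..b}"
    using integrable_continuous_interval[OF cf] I0 by (metis has_integral_integral)
  moreover have nn: "0 \<le> h z0 * (h x * \<phi> x)" for x
  proof (cases "\<bar>x - z0\<bar> < \<delta>")
    case True
    then have "h z0 * h x > 0" by (rule hpos)
    moreover have "\<phi> x \<ge> 0" by (simp add: \<phi>_def bump_def psik0_nonneg)
    ultimately show ?thesis by (simp add: mult.assoc[symmetric])
  next
    case False
    then have "\<phi> x = 0" using supp0 by simp
    then show ?thesis by simp
  qed
  ultimately have "h z0 * (h z0 * \<phi> z0) = 0"
    using has_integral_0_cbox_imp_0[of a b "\<lambda>z. h z0 * (h z * \<phi> z)" z0] cf z0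
    by (simp add: box_real)
  moreover have "\<phi> z0 > 0" using \<delta> by (simp add: \<phi>_def bump_def psik0_pos)
  ultimately show False using nz by simp
qed

lemma support_dz:
  assumes "\<And>z. z \<notin> {c..d} \<Longrightarrow> v z = 0" "z \<notin> {c..d}"
  shows "dz k v z = 0"
  using assms(2)
proof (induction k arbitrary: z)
  case 0 then show ?case using assms(1) by simp
next
  case (Suc k)
  have "dz 1 (dz k v) z = dz 1 (\<lambda>_. 0) z"
    by (rule dz_local[of "- {c..d}"]) (use Suc in auto)
  then show ?case by (simp add: dz_dz dz_const)
qed

lemma ibp1:
  fixes u V :: "real \<Rightarrow> real"
  assumes u: "Cinf u" and V: "Cinf V" and ab: "a \<le> b" and Va: "V a = 0" and Vb: "V b = 0"
  shows "integral {a..b} (\<lambda>z. u z * deriv V z) = - integral {a..b} (\<lambda>z. deriv u z * V z)"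
proof -
  define I where "I = integral {a..b} (\<lambda>z. u z * deriv V z)"
  have cu: "continuous_on {a..b} u" and cV: "continuous_on {a..b} V"
    and cdV: "continuous_on {a..b} (deriv V)"
    using Cinf_cont u V Cinf_deriv by blast+
  have "(\<lambda>z. u z * deriv V z) integrable_on {a..b}"
    by (intro integrable_continuous_interval continuous_intros cu cdV)
  then have "((\<lambda>z. u z * deriv V z) has_integral (u b * V b - u a * V a - (- I))) {a..b}"
    using Va Vb by (simp add: I_def has_integral_integral)
  moreover have d1: "\<And>x. x \<in> {a..b} \<Longrightarrow> (u has_vector_derivative deriv u x) (at x)"
    using u Cinf_DERIV has_real_derivative_iff_has_vector_derivative by blast
  moreover have d2: "\<And>x. x \<in> {a..b} \<Longrightarrow> (V has_vector_derivative deriv V x) (at x)"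
    using V Cinf_DERIV has_real_derivative_iff_has_vector_derivative by blast
  ultimately have "((\<lambda>z. deriv u z * V z) has_integral (- I)) {a..b}"
    using integration_by_parts[OF bounded_bilinear_mult ab cu cV d1 d2] by blast
  then show ?thesis unfolding I_def by (simp add: integral_unique)
qed

lemma ibpN:
  fixes u v :: "real \<Rightarrow> real"
  assumes v: "Cinf v" and cd: "a < c" "c \<le> d" "d < b" and supp: "\<And>z. z \<notin> {c..d} \<Longrightarrow> v z = 0"
  shows "Cinf u \<Longrightarrow> integral {a..b} (\<lambda>z. u z * dz N v z) = (-1) ^ N * integral {a..b} (\<lambda>z. dz N u z * v z)"
proof (induction N arbitrary: u)
  case 0 then show ?case by simp
next
  case (Suc N)
  have "integral {a..b} (\<lambda>z. u z * dz (Suc N) v z) = integral {a..b} (\<lambda>z. u z * deriv (dz N v) z)"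
    by (simp add: dz_Suc)
  also have "\<dots> = - integral {a..b} (\<lambda>z. deriv u z * dz N v z)"
    by (rule ibp1[OF Suc.prems Cinf_dz[OF v]]) (use cd supp in \<open>auto intro!: support_dz[of c d]\<close>)
  also have "\<dots> = - ((-1) ^ N * integral {a..b} (\<lambda>z. dz N (deriv u) z * v z))"
    using Suc.IH[OF Cinf_deriv[OF Suc.prems]] by simp
  also have "\<dots> = (-1) ^ Suc N * integral {a..b} (\<lambda>z. dz (Suc N) u z * v z)"
    by (simp add: dz_Suc')
  finally show ?case .
qed

abbreviation "e1 \<equiv> ((1::real), (0::real))"
abbreviation "e2 \<equiv> ((0::real), (1::real))"

lemma e1_Basis: "e1 \<in> Basis" and e2_Basis: "e2 \<in> Basis"
  by (auto simp: Basis_prod_def Basis_real_def)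

lemma line1: "(0, z) + s *\<^sub>R e1 = (s, z)" and line2: "(t, 0) + s *\<^sub>R e2 = (t, s)"
  by simp_all

lemma pder_e1_eq: "pder e1 G (t, z) = deriv (\<lambda>s. G (s, z)) t"
  using pder_line[of e1 G "(0, z)" t] by (simp only: line1)

lemma pder_e2_eq: "pder e2 G (t, z) = deriv (\<lambda>s. G (t, s)) z"
  using pder_line[of e2 G "(t, 0)" z] by (simp only: line2)

lemma DERIV_e1: "smooth G \<Longrightarrow> ((\<lambda>s. G (s, z)) has_real_derivative pder e1 G (t, z)) (at t)"
proof -
  assume G: "smooth G"
  have "(\<lambda>s. G ((0, z) + s *\<^sub>R e1)) differentiable (at t)" by (rule smooth_line_diff[OF G e1_Basis])
  then have "((\<lambda>s. G ((0, z) + s *\<^sub>R e1)) has_real_derivative deriv (\<lambda>s. G ((0, z) + s *\<^sub>R e1)) t) (at t)"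
    by (simp add: DERIV_deriv_iff_real_differentiable)
  then show ?thesis by (simp only: line1 pder_e1_eq)
qed

lemma DERIV_e2: "smooth G \<Longrightarrow> ((\<lambda>s. G (t, s)) has_real_derivative pder e2 G (t, z)) (at z)"
proof -
  assume G: "smooth G"
  have "(\<lambda>s. G ((t, 0) + s *\<^sub>R e2)) differentiable (at z)" by (rule smooth_line_diff[OF G e2_Basis])
  then have "((\<lambda>s. G ((t, 0) + s *\<^sub>R e2)) has_real_derivative deriv (\<lambda>s. G ((t, 0) + s *\<^sub>R e2)) z) (at z)"
    by (simp add: DERIV_deriv_iff_real_differentiable)
  then show ?thesis by (simp only: line2 pder_e2_eq)
qed

lemma mixed_pt:
  fixes X :: "real \<times> real \<Rightarrow> real"
  assumes X: "smooth X"
  shows "pder e2 (pder e1 X) (t0, z0) = pder e1 (pder e2 X) (t0, z0)"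
proof -
  define u where "u = pder e2 X"
  define W where "W = pder e1 X"
  define V where "V = pder e1 u"
  have su: "smooth u" unfolding u_def by (rule smooth_pder[OF X e2_Basis])
  have sW: "smooth W" unfolding W_def by (rule smooth_pder[OF X e1_Basis])
  have sV: "smooth V" unfolding V_def by (rule smooth_pder[OF su e1_Basis])
  have cu: "continuous_on UNIV u" and cV: "continuous_on UNIV V"
    using smooth_cont su sV by blast+
  define \<alpha> where "\<alpha> = z0 - 1"
  have cu_line: "continuous_on S (\<lambda>v. u (t, v))" for t S
    by (rule continuous_on_compose2[OF cu]) (auto intro!: continuous_intros)
  have cV_line: "continuous_on S (\<lambda>v. V (t, v))" for t S
    by (rule continuous_on_compose2[OF cV]) (auto intro!: continuous_intros)
  have ftc: "X (t, z) = X (t, \<alpha>) + integral {\<alpha>..z} (\<lambda>v. u (t, v))" if "\<alpha> \<le> z" for t z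
  proof -
    have "((\<lambda>v. u (t, v)) has_integral (X (t, z) - X (t, \<alpha>))) {\<alpha>..z}"
    proof (rule fundamental_theorem_of_calculus[OF that])
      fix v assume "v \<in> {\<alpha>..z}"
      have "((\<lambda>s. X (t, s)) has_real_derivative u (t, v)) (at v)"
        unfolding u_def by (rule DERIV_e2[OF X])
      then show "((\<lambda>s. X (t, s)) has_vector_derivative u (t, v)) (at v within {\<alpha>..z})"
        by (simp add: has_real_derivative_iff_has_vector_derivative[symmetric] has_field_derivative_at_within)
    qed
    then show ?thesis by (simp add: integral_unique)
  qed
  have leib: "((\<lambda>t. integral {\<alpha>..z} (\<lambda>v. u (t, v))) has_real_derivative integral {\<alpha>..z} (\<lambda>v. V (t, v))) (at t)" for t z
  proof -
    have "((\<lambda>t. integral (cbox \<alpha> z) (\<lambda>v. u (t, v))) has_real_derivative integral (cbox \<alpha> z) (\<lambda>v. V (t, v))) (at t within UNIV)"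
    proof (rule leibniz_rule_field_derivative[where fx="\<lambda>t v. V (t, v)"])
      fix x v show "((\<lambda>x. u (x, v)) has_real_derivative V (x, v)) (at x within UNIV)"
        unfolding V_def by (rule DERIV_e1[OF su])
    next
      fix x show "(\<lambda>v. u (x, v)) integrable_on cbox \<alpha> z"
        by (rule integrable_continuous) (rule cu_line)
    next
      show "continuous_on (UNIV \<times> cbox \<alpha> z) (\<lambda>(x, v). V (x, v))"
        using continuous_on_subset[OF cV] by simp
    qed auto
    then show ?thesis by simp
  qed
  have Wform: "W (t, z) = W (t, \<alpha>) + integral {\<alpha>..z} (\<lambda>v. V (t, v))" if "\<alpha> \<le> z" for t z
  proof -
    have "((\<lambda>s. X (s, z)) has_real_derivative W (t, z)) (at t)"
      unfolding W_def by (rule DERIV_e1[OF X])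
    moreover have "((\<lambda>s. X (s, \<alpha>) + integral {\<alpha>..z} (\<lambda>v. u (s, v))) has_real_derivative
        W (t, \<alpha>) + integral {\<alpha>..z} (\<lambda>v. V (t, v))) (at t)"
      by (intro DERIV_add leib) (unfold W_def, rule DERIV_e1[OF X])
    moreover have "(\<lambda>s. X (s, z)) = (\<lambda>s. X (s, \<alpha>) + integral {\<alpha>..z} (\<lambda>v. u (s, v)))"
      using ftc[OF that] by auto
    ultimately show ?thesis using DERIV_unique by metis
  qed
  have z0in: "z0 \<in> {\<alpha>..z0+1}" unfolding \<alpha>_def by simp
  have "((\<lambda>z. integral {\<alpha>..z} (\<lambda>v. V (t0, v))) has_real_derivative V (t0, z0)) (at z0 within {\<alpha>..z0+1})"
    using integral_has_real_derivative[OF cV_line z0in] .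
  then have "((\<lambda>z. integral {\<alpha>..z} (\<lambda>v. V (t0, v))) has_real_derivative V (t0, z0)) (at z0)"
  proof -
    have "z0 \<in> {\<alpha><..<z0+1}" unfolding \<alpha>_def by simp
    then have zin: "z0 \<in> interior {\<alpha>..z0+1}" by (simp only: interior_atLeastAtMost_real)
    show ?thesis using \<open>((\<lambda>z. integral {\<alpha>..z} (\<lambda>v. V (t0, v))) has_real_derivative V (t0, z0)) (at z0 within {\<alpha>..z0+1})\<close>
      unfolding at_within_interior[OF zin] .
  qed
  note dI = this
  have "((\<lambda>z. W (t0, \<alpha>) + integral {\<alpha>..z} (\<lambda>v. V (t0, v))) has_real_derivative 0 + V (t0, z0)) (at z0)"
    by (rule DERIV_add[OF DERIV_const dI])
  then have dW: "((\<lambda>z. W (t0, \<alpha>) + integral {\<alpha>..z} (\<lambda>v. V (t0, v))) has_real_derivative V (t0, z0)) (at z0)"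
    by (simp only: add_0_left)
  have "((\<lambda>z. W (t0, z)) has_real_derivative V (t0, z0)) (at z0)"
  proof (rule has_field_derivative_transform_within_open[OF dW, of "{\<alpha><..}"])
    show "z0 \<in> {\<alpha><..}" unfolding \<alpha>_def by simp
    fix x assume "x \<in> {\<alpha><..}"
    then have "\<alpha> \<le> x" by simp
    from Wform[OF this, of t0] show "W (t0, \<alpha>) + integral {\<alpha>..x} (\<lambda>v. V (t0, v)) = W (t0, x)" by simp
  qed simp
  then have "deriv (\<lambda>z. W (t0, z)) z0 = V (t0, z0)" by (rule DERIV_imp_deriv)
  then show ?thesis by (simp add: pder_e2_eq W_def V_def u_def)
qed

lemma mixed: "smooth X \<Longrightarrow> pder e2 (pder e1 X) = pder e1 (pder e2 X)"
  using mixed_pt by fastforce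

lemma comm_pow: "smooth X \<Longrightarrow> pder e1 ((pder e2 ^^ j) X) = (pder e2 ^^ j) (pder e1 X)"
proof (induction j)
  case 0 then show ?case by simp
next
  case (Suc j)
  have s: "smooth ((pder e2 ^^ j) X)" by (rule smooth_funpow_pder[OF Suc.prems e2_Basis])
  have "pder e1 ((pder e2 ^^ Suc j) X) = pder e1 (pder e2 ((pder e2 ^^ j) X))" by simp
  also have "\<dots> = pder e2 (pder e1 ((pder e2 ^^ j) X))" by (rule mixed[OF s, symmetric])
  also have "\<dots> = (pder e2 ^^ Suc j) (pder e1 X)" using Suc by simp
  finally show ?case .
qed

lemma dz_e2: fixes G :: "real \<times> real \<Rightarrow> real" shows "dz j (\<lambda>w. G (s, w)) z = (pder e2 ^^ j) G (s, z)"
  using dz_line[of j G "(s, 0)" e2] by (simp add: fun_eq_iff)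

lemma time_deriv_dz:
  fixes X :: "real \<times> real \<Rightarrow> real"
  assumes X: "smooth X"
  shows "deriv (\<lambda>s. dz j (\<lambda>w. X (s, w)) z) t = dz j (\<lambda>w. deriv (\<lambda>s. X (s, w)) t) z"
proof -
  have "deriv (\<lambda>s. dz j (\<lambda>w. X (s, w)) z) t = deriv (\<lambda>s. (pder e2 ^^ j) X (s, z)) t"
    by (simp add: dz_e2)
  also have "\<dots> = pder e1 ((pder e2 ^^ j) X) (t, z)" by (simp add: pder_e1_eq)
  also have "\<dots> = (pder e2 ^^ j) (pder e1 X) (t, z)" by (simp add: comm_pow[OF X])
  also have "\<dots> = dz j (\<lambda>w. pder e1 X (t, w)) z" by (simp add: dz_e2)
  also have "\<dots> = dz j (\<lambda>w. deriv (\<lambda>s. X (s, w)) t) z" by (simp add: pder_e1_eq)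
  finally show ?thesis .
qed

lemma Cinf_e2: fixes G :: "real \<times> real \<Rightarrow> real" shows "smooth G \<Longrightarrow> Cinf (\<lambda>w. G (t, w))"
  using Cinf_line[of G e2 "(t, 0)"] e2_Basis by simp

lemma Cinf_integrable: "Cinf f \<Longrightarrow> f integrable_on {a..b}"
  by (rule integrable_continuous_interval, rule Cinf_cont)

lemma int_sum: "finite S \<Longrightarrow> (\<And>i. i \<in> S \<Longrightarrow> Cinf (F i)) \<Longrightarrow>
   integral {a..b} (\<lambda>z. \<Sum>i\<in>S. F i z) = (\<Sum>i\<in>S. integral {a..b} (F i))"
  by (rule integral_sum) (auto intro: Cinf_integrable)

lemma Cinf_snd: "Cinf f \<Longrightarrow> continuous_on S (\<lambda>p. f (snd p))"
  by (rule continuous_on_compose2[OF Cinf_cont[of f UNIV]]) (auto intro: continuous_intros)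

lemma smooth_comp_cont: "smooth F \<Longrightarrow> continuous_on S g \<Longrightarrow> continuous_on S (\<lambda>x. F (g x))"
  by (rule continuous_on_compose2[OF smooth_cont]) auto

lemma Cinf_x: fixes x :: "real \<Rightarrow> real \<Rightarrow> real^'n" shows "smooth (\<lambda>(t, z). x t z $ i) \<Longrightarrow> Cinf (\<lambda>w. x t w $ i)"
  using Cinf_e2[of "\<lambda>(t, z). x t z $ i" t] by simp

lemma Hfunc_deriv:
  fixes H :: "real^('l::finite) \<Rightarrow> real" and I :: "'l \<Rightarrow> ('n::finite) \<times> nat" and x0 \<eta> :: "real \<Rightarrow> real^'n"
  assumes H: "smooth H" and x0: "\<And>i. Cinf (\<lambda>w. x0 w $ i)" and \<eta>: "\<And>i. Cinf (\<lambda>w. \<eta> w $ i)"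
  shows "((\<lambda>\<epsilon>. Hfunc a b H I (\<lambda>z. x0 z + \<epsilon> *\<^sub>R \<eta> z)) has_real_derivative
     integral {a..b} (\<lambda>z. \<Sum>r\<in>UNIV. dz (snd (I r)) (\<lambda>w. \<eta> w $ fst (I r)) z *
        pder (axis r 1) H (\<chi> r. dz (snd (I r)) (\<lambda>w. x0 w $ fst (I r)) z))) (at 0)"
proof -
  define xb where "xb r = dz (snd (I r)) (\<lambda>w. x0 w $ fst (I r))" for r
  define eb where "eb r = dz (snd (I r)) (\<lambda>w. \<eta> w $ fst (I r))" for r
  have cxb: "Cinf (xb r)" for r unfolding xb_def by (rule Cinf_dz[OF x0])
  have ceb: "Cinf (eb r)" for r unfolding eb_def by (rule Cinf_dz[OF \<eta>])
  have eqH: "Hfunc a b H I (\<lambda>z. x0 z + \<epsilon> *\<^sub>R \<eta> z) = integral {a..b} (\<lambda>z. H (\<chi> r. xb r z + \<epsilon> * eb r z))" for \<epsilon>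
  proof -
    have "dz (snd (I p)) (\<lambda>w. (x0 w + \<epsilon> *\<^sub>R \<eta> w) $ fst (I p)) z = xb p z + \<epsilon> * eb p z" for p z
    proof -
      have "(\<lambda>w. (x0 w + \<epsilon> *\<^sub>R \<eta> w) $ fst (I p)) = (\<lambda>w. x0 w $ fst (I p) + (\<lambda>w. \<epsilon> * \<eta> w $ fst (I p)) w)"
        by simp
      then show ?thesis
        by (simp add: dz_add x0 \<eta> Cinf_cmult dz_cmult xb_def eb_def)
    qed
    then show ?thesis unfolding Hfunc_def by simp
  qed
  define Hq where "Hq r = pder (axis r 1) H" for r
  have sHq: "smooth (Hq r)" for r unfolding Hq_def by (rule smooth_pder[OF H axis1_Basis])
  have fx: "((\<lambda>\<epsilon>. H (\<chi> r. xb r z + \<epsilon> * eb r z)) has_real_derivative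
      (\<Sum>r\<in>UNIV. eb r z * Hq r (\<chi> r. xb r z + \<epsilon> * eb r z))) (at \<epsilon>)" for \<epsilon> z
  proof -
    have d: "((\<lambda>\<epsilon>. xb r z + \<epsilon> * eb r z) has_real_derivative eb r z) (at \<epsilon>)" for r
      by (auto intro!: derivative_eq_intros)
    show ?thesis
      using chain_vec[OF H, where \<gamma>="\<lambda>r \<epsilon>. xb r z + \<epsilon> * eb r z" and \<gamma>'="\<lambda>r. eb r z" and z=\<epsilon>, OF d]
      by (simp add: Hq_def)
  qed
  have cvec: "continuous_on S (\<lambda>p. \<chi> r. xb r (snd p) + fst p * eb r (snd p))" for S
    by (intro continuous_intros Cinf_snd cxb ceb)
  have "((\<lambda>\<epsilon>. integral (cbox a b) (\<lambda>z. H (\<chi> r. xb r z + \<epsilon> * eb r z))) has_real_derivative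
      integral (cbox a b) (\<lambda>z. \<Sum>r\<in>UNIV. eb r z * Hq r (\<chi> r. xb r z + 0 * eb r z))) (at 0 within UNIV)"
  proof (rule leibniz_rule_field_derivative[where fx="\<lambda>\<epsilon> z. \<Sum>r\<in>UNIV. eb r z * Hq r (\<chi> r. xb r z + \<epsilon> * eb r z)"])
    fix \<epsilon> z show "((\<lambda>\<epsilon>. H (\<chi> r. xb r z + \<epsilon> * eb r z)) has_real_derivative
      (\<Sum>r\<in>UNIV. eb r z * Hq r (\<chi> r. xb r z + \<epsilon> * eb r z))) (at \<epsilon> within UNIV)"
      using fx by simp
  next
    fix \<epsilon> :: real
    have "continuous_on (cbox a b) (\<lambda>z. H (\<chi> r. xb r z + \<epsilon> * eb r z))"
      by (intro smooth_comp_cont[OF H] continuous_intros Cinf_cont cxb ceb)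
    then show "(\<lambda>z. H (\<chi> r. xb r z + \<epsilon> * eb r z)) integrable_on cbox a b"
      by (rule integrable_continuous)
  next
    have "continuous_on (UNIV \<times> cbox a b) (\<lambda>p. \<Sum>r\<in>UNIV. eb r (snd p) * Hq r (\<chi> r. xb r (snd p) + fst p * eb r (snd p)))"
      by (intro continuous_intros Cinf_snd ceb smooth_comp_cont[OF sHq] cvec)
    then show "continuous_on (UNIV \<times> cbox a b) (\<lambda>(\<epsilon>, z). \<Sum>r\<in>UNIV. eb r z * Hq r (\<chi> r. xb r z + \<epsilon> * eb r z))"
      by (simp add: case_prod_beta')
  qed auto
  then show ?thesis
    by (simp add: eqH Hq_def xb_def eb_def)
qed

lemma ident:
  fixes H :: "real^('l::finite) \<Rightarrow> real" and I :: "'l \<Rightarrow> ('n::finite) \<times> nat"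
    and x g :: "real \<Rightarrow> real \<Rightarrow> real^'n"
  assumes H: "smooth H" and xs: "\<And>i. smooth (\<lambda>(t, z). x t z $ i)"
    and gs: "\<And>i. smooth (\<lambda>(t, z). g t z $ i)"
    and g_var: "\<And>t. is_var_deriv a b (Hfunc a b H I) (x t) (g t)"
    and z: "z \<in> {a<..<b}"
  shows "g t z $ c = (\<Sum>q\<in>{q. fst (I q) = c}. (-1) ^ snd (I q) *
            dz (snd (I q)) (\<lambda>w. pder (axis q 1) H (\<chi> r. dz (snd (I r)) (\<lambda>u. x t u $ fst (I r)) w)) z)"
proof -
  define phi where "phi q = (\<lambda>w. pder (axis q 1) H (\<chi> r. dz (snd (I r)) (\<lambda>u. x t u $ fst (I r)) w))" for q
  have cphi: "Cinf (phi q)" for q unfolding phi_def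
    by (rule Cinf_chain[OF Cinf_dz[OF Cinf_x[OF xs]] smooth_pder[OF H axis1_Basis]])
  define Q where "Q = {q. fst (I q) = c}"
  define Gc where "Gc w = (\<Sum>q\<in>Q. (-1) ^ snd (I q) * dz (snd (I q)) (phi q) w)" for w
  have cGc: "Cinf Gc" unfolding Gc_def[abs_def]
    by (intro Cinf_sum Cinf_cmult Cinf_dz cphi) auto
  have cg: "Cinf (\<lambda>w. g t w $ c)" by (rule Cinf_x[OF gs])
  define h where "h w = g t w $ c - Gc w" for w
  have ch: "Cinf h" unfolding h_def[abs_def] by (rule Cinf_minus[OF cg cGc])
  have "h z = 0"
  proof (rule fundamental[of h a z b])
    show "continuous_on UNIV h" by (rule Cinf_cont[OF ch])
    show "a < z" "z < b" using z by auto
  next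
    fix \<phi> c' d'
    assume c\<phi>: "Cinf \<phi>" and cd: "a < c'" "c' \<le> d'" "d' < b"
      and supp: "\<And>z. z \<notin> {c'..d'} \<Longrightarrow> \<phi> z = 0"
    define \<eta> where "\<eta> w = (\<chi> i. if i = c then \<phi> w else 0)" for w
    have \<eta>i: "(\<lambda>w. \<eta> w $ i) = (if i = c then \<phi> else (\<lambda>_. 0))" for i
      by (auto simp: \<eta>_def)
    have c\<eta>: "Cinf (\<lambda>w. \<eta> w $ i)" for i
      unfolding \<eta>i using c\<phi> Cinf_const by auto
    have test: "test_fun a b \<eta>"
    proof -
      have A: "\<forall>i. smooth (\<lambda>z. \<eta> z $ i)" using c\<eta> smooth_real_iff by blast
      have B: "\<forall>z. z \<notin> {c'..d'} \<longrightarrow> \<eta> z = 0" using supp by (auto simp: \<eta>_def vec_eq_iff)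
      show ?thesis unfolding test_fun_def using A B cd by blast
    qed
    have D1: "((\<lambda>\<epsilon>. Hfunc a b H I (\<lambda>z. x t z + \<epsilon> *\<^sub>R \<eta> z)) has_real_derivative
        integral {a..b} (\<lambda>z. g t z \<bullet> \<eta> z)) (at 0)"
      using g_var[of t] test unfolding is_var_deriv_def by blast
    have D2: "((\<lambda>\<epsilon>. Hfunc a b H I (\<lambda>z. x t z + \<epsilon> *\<^sub>R \<eta> z)) has_real_derivative
        integral {a..b} (\<lambda>z. \<Sum>r\<in>UNIV. dz (snd (I r)) (\<lambda>w. \<eta> w $ fst (I r)) z * phi r z)) (at 0)"
      using Hfunc_deriv[OF H Cinf_x[OF xs] c\<eta>, of a b I t] by (simp add: phi_def)
    have E1: "integral {a..b} (\<lambda>z. g t z \<bullet> \<eta> z) =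
        integral {a..b} (\<lambda>z. \<Sum>r\<in>UNIV. dz (snd (I r)) (\<lambda>w. \<eta> w $ fst (I r)) z * phi r z)"
      using DERIV_unique[OF D1 D2] .
    have inner_eq: "g t z \<bullet> \<eta> z = g t z $ c * \<phi> z" for z
    proof -
      have "g t z \<bullet> \<eta> z = (\<Sum>i\<in>UNIV. if i = c then g t z $ c * \<phi> z else 0)"
        unfolding inner_vec_def by (intro sum.cong) (auto simp: \<eta>_def)
      then show ?thesis by simp
    qed
    have sum_eq: "(\<Sum>r\<in>UNIV. dz (snd (I r)) (\<lambda>w. \<eta> w $ fst (I r)) z * phi r z) =
        (\<Sum>r\<in>Q. phi r z * dz (snd (I r)) \<phi> z)" for z
    proof -
      have "(\<Sum>r\<in>UNIV. dz (snd (I r)) (\<lambda>w. \<eta> w $ fst (I r)) z * phi r z) =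
          (\<Sum>r\<in>UNIV. if fst (I r) = c then phi r z * dz (snd (I r)) \<phi> z else 0)"
        by (intro sum.cong) (auto simp: \<eta>i dz_const)
      also have "\<dots> = (\<Sum>r\<in>Q. phi r z * dz (snd (I r)) \<phi> z)"
        by (simp add: Q_def sum.inter_filter[symmetric])
      finally show ?thesis .
    qed
    have "integral {a..b} (\<lambda>z. \<Sum>r\<in>UNIV. dz (snd (I r)) (\<lambda>w. \<eta> w $ fst (I r)) z * phi r z)
        = integral {a..b} (\<lambda>z. \<Sum>r\<in>Q. phi r z * dz (snd (I r)) \<phi> z)"
      by (simp only: sum_eq)
    also have "\<dots> = (\<Sum>r\<in>Q. integral {a..b} (\<lambda>z. phi r z * dz (snd (I r)) \<phi> z))"
      by (rule int_sum) (auto intro!: Cinf_mult cphi Cinf_dz c\<phi>)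
    also have "\<dots> = (\<Sum>r\<in>Q. (-1) ^ snd (I r) * integral {a..b} (\<lambda>z. dz (snd (I r)) (phi r) z * \<phi> z))"
      by (intro sum.cong refl ibpN[OF c\<phi> cd supp cphi])
    also have "\<dots> = (\<Sum>r\<in>Q. integral {a..b} (\<lambda>z. (-1) ^ snd (I r) * dz (snd (I r)) (phi r) z * \<phi> z))"
      by (simp add: mult.assoc)
    also have "\<dots> = integral {a..b} (\<lambda>z. \<Sum>r\<in>Q. (-1) ^ snd (I r) * dz (snd (I r)) (phi r) z * \<phi> z)"
      by (rule int_sum[symmetric]) (auto intro!: Cinf_mult Cinf_cmult cphi Cinf_dz c\<phi>)
    also have "\<dots> = integral {a..b} (\<lambda>z. Gc z * \<phi> z)"
      by (simp add: Gc_def sum_distrib_right)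
    finally have E2: "integral {a..b} (\<lambda>z. g t z $ c * \<phi> z) = integral {a..b} (\<lambda>z. Gc z * \<phi> z)"
      using E1 inner_eq by simp
    have "integral {a..b} (\<lambda>z. h z * \<phi> z) = integral {a..b} (\<lambda>z. g t z $ c * \<phi> z - Gc z * \<phi> z)"
      by (simp add: h_def left_diff_distrib)
    also have "\<dots> = integral {a..b} (\<lambda>z. g t z $ c * \<phi> z) - integral {a..b} (\<lambda>z. Gc z * \<phi> z)"
      by (rule integral_diff) (auto intro!: Cinf_integrable Cinf_mult cg cGc c\<phi>)
    also have "\<dots> = 0" using E2 by simp
    finally show "integral {a..b} (\<lambda>z. h z * \<phi> z) = 0" .
  qed
  then show ?thesis by (simp add: h_def Gc_def Q_def phi_def)
qed


lemma Jentry_fun: "Jentry P m r c f = (\<lambda>z. \<Sum>k\<le>m. P k $ r $ c * dz k f z)"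
  by (simp add: Jentry_def fun_eq_iff)

lemma Cinf_Jentry: "Cinf f \<Longrightarrow> Cinf (Jentry P m r c f)"
  unfolding Jentry_fun by (intro Cinf_sum Cinf_cmult Cinf_dz) auto

lemma Jentry_local: "open S \<Longrightarrow> (\<And>w. w \<in> S \<Longrightarrow> f w = f' w) \<Longrightarrow> z \<in> S \<Longrightarrow>
    Jentry P m r c f z = Jentry P m r c f' z"
  unfolding Jentry_def by (intro sum.cong refl arg_cong2[where f="(*)"] dz_local) auto

lemma Jentry_sum: "finite Q \<Longrightarrow> (\<And>q. q \<in> Q \<Longrightarrow> Cinf (\<psi> q)) \<Longrightarrow>
    Jentry P m r c (\<lambda>w. \<Sum>q\<in>Q. \<psi> q w) z = (\<Sum>q\<in>Q. Jentry P m r c (\<psi> q) z)"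
  unfolding Jentry_def by (simp add: dz_sum sum_distrib_left sum.swap[of _ Q])

lemma time_eq:
  fixes H :: "real^('l::finite) \<Rightarrow> real" and I :: "'l \<Rightarrow> ('n::finite) \<times> nat"
    and x g :: "real \<Rightarrow> real \<Rightarrow> real^'n" and P :: "nat \<Rightarrow> real^'n^'n"
  assumes H: "smooth H" and xs: "\<And>i. smooth (\<lambda>(t, z). x t z $ i)"
    and gs: "\<And>i. smooth (\<lambda>(t, z). g t z $ i)"
    and g_var: "\<And>t. is_var_deriv a b (Hfunc a b H I) (x t) (g t)"
    and sol: "\<And>t z i. z \<in> {a<..<b} \<Longrightarrow> deriv (\<lambda>s. x s z $ i) t = Jop P m (g t) z $ i"
    and z: "z \<in> {a<..<b}"
  shows "deriv (\<lambda>s. dz (snd (I p)) (\<lambda>w. x s w $ fst (I p)) z) t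
            = Jbb P m I
                (\<lambda>w. \<chi> q. pder (axis q 1) H
                        (\<chi> r. dz (snd (I r)) (\<lambda>u. x t u $ fst (I r)) w)) z $ p"
proof -
  define phi where "phi q = (\<lambda>w. pder (axis q 1) H (\<chi> r. dz (snd (I r)) (\<lambda>u. x t u $ fst (I r)) w))" for q
  have cphi: "Cinf (phi q)" for q unfolding phi_def
    by (rule Cinf_chain[OF Cinf_dz[OF Cinf_x[OF xs]] smooth_pder[OF H axis1_Basis]])
  define \<psi> where "\<psi> q = (\<lambda>v. (-1) ^ snd (I q) * dz (snd (I q)) (phi q) v)" for q
  have c\<psi>: "Cinf (\<psi> q)" for q unfolding \<psi>_def by (intro Cinf_cmult Cinf_dz cphi)
  have S1: "deriv (\<lambda>s. dz (snd (I p)) (\<lambda>w. x s w $ fst (I p)) z) t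
      = dz (snd (I p)) (\<lambda>w. deriv (\<lambda>s. x s w $ fst (I p)) t) z"
    using time_deriv_dz[OF xs[of "fst (I p)"], of "snd (I p)" z t] by (simp only: prod.case)
  have S2: "\<dots> = dz (snd (I p)) (\<lambda>w. Jop P m (g t) w $ fst (I p)) z"
    by (rule dz_local[of "{a<..<b}"]) (use z sol in auto)
  have S3: "Jop P m (g t) w $ fst (I p) = (\<Sum>q\<in>UNIV. Jentry P m (fst (I p)) (fst (I q)) (\<psi> q) w)"
    if w: "w \<in> {a<..<b}" for w
  proof -
    have "Jop P m (g t) w $ fst (I p) = (\<Sum>c\<in>UNIV. Jentry P m (fst (I p)) c (\<lambda>w. g t w $ c) w)"
      by (simp add: Jop_def)
    also have "\<dots> = (\<Sum>c\<in>UNIV. Jentry P m (fst (I p)) c (\<lambda>w. \<Sum>q\<in>{q. q \<in> UNIV \<and> fst (I q) = c}. \<psi> q w) w)"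
    proof (intro sum.cong refl Jentry_local[of "{a<..<b}"])
      fix c w' assume "w' \<in> {a<..<b}"
      then show "g t w' $ c = (\<Sum>q\<in>{q. q \<in> UNIV \<and> fst (I q) = c}. \<psi> q w')"
        using ident[OF H xs gs g_var, of w' t c] by (simp add: \<psi>_def phi_def)
    qed (use w in auto)
    also have "\<dots> = (\<Sum>c\<in>UNIV. \<Sum>q\<in>{q. q \<in> UNIV \<and> fst (I q) = c}. Jentry P m (fst (I p)) c (\<psi> q) w)"
      by (intro sum.cong refl Jentry_sum c\<psi>) auto
    also have "\<dots> = (\<Sum>c\<in>UNIV. \<Sum>q\<in>{q. q \<in> UNIV \<and> fst (I q) = c}. Jentry P m (fst (I p)) (fst (I q)) (\<psi> q) w)"
      by (intro sum.cong refl) auto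
    also have "\<dots> = (\<Sum>q\<in>UNIV. Jentry P m (fst (I p)) (fst (I q)) (\<psi> q) w)"
      by (rule sum.group) auto
    finally show ?thesis .
  qed
  have S4: "dz (snd (I p)) (\<lambda>w. Jop P m (g t) w $ fst (I p)) z
      = dz (snd (I p)) (\<lambda>w. \<Sum>q\<in>UNIV. Jentry P m (fst (I p)) (fst (I q)) (\<psi> q) w) z"
    by (rule dz_local[of "{a<..<b}"]) (use z S3 in auto)
  have S5: "\<dots> = (\<Sum>q\<in>UNIV. dz (snd (I p)) (Jentry P m (fst (I p)) (fst (I q)) (\<psi> q)) z)"
    by (subst dz_sum) (auto intro: Cinf_Jentry c\<psi>)
  have S6: "Jbb P m I (\<lambda>w. \<chi> q. pder (axis q 1) H (\<chi> r. dz (snd (I r)) (\<lambda>u. x t u $ fst (I r)) w)) z $ p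
      = (\<Sum>q\<in>UNIV. dz (snd (I p)) (Jentry P m (fst (I p)) (fst (I q)) (\<psi> q)) z)"
  proof -
    have e: "(\<lambda>u. (\<chi> q. pder (axis q 1) H (\<chi> r. dz (snd (I r)) (\<lambda>u. x t u $ fst (I r)) u)) $ q) = phi q" for q
      by (simp add: phi_def)
    show ?thesis unfolding Jbb_def vec_lambda_beta e
      by (simp add: \<psi>_def phi_def)
  qed
  show ?thesis using S1 S2 S4 S5 S6 by simp
qed

lemma Jbb_expand:
  fixes P :: "nat \<Rightarrow> real^'n^'n" and I :: "'l::finite \<Rightarrow> ('n::finite) \<times> nat" and f :: "real \<Rightarrow> real^'l"
  assumes cf: "\<And>q. Cinf (\<lambda>u. f u $ q)"
  shows "Jbb P m I f z $ p = (\<Sum>q\<in>UNIV. \<Sum>k\<le>m. (P k $ fst (I p) $ fst (I q) * (-1) ^ snd (I q)) *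
            dz (snd (I p) + k + snd (I q)) (\<lambda>u. f u $ q) z)"
proof -
  have inner: "Jentry P m r c (\<lambda>v. (-1) ^ jq * dz jq (\<lambda>u. f u $ q) v) =
      (\<lambda>w. \<Sum>k\<le>m. (P k $ r $ c * (-1) ^ jq) * dz (k + jq) (\<lambda>u. f u $ q) w)" for r c jq q
    by (simp add: Jentry_fun dz_cmult Cinf_dz cf dz_dz mult.assoc)
  have outer: "dz jp (\<lambda>w. \<Sum>k\<le>m. C k * dz (k + jq) (\<lambda>u. f u $ q) w) z =
      (\<Sum>k\<le>m. C k * dz (jp + k + jq) (\<lambda>u. f u $ q) z)" for jp jq q C
  proof -
    have "dz jp (\<lambda>w. \<Sum>k\<le>m. C k * dz (k + jq) (\<lambda>u. f u $ q) w) =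
        (\<lambda>w. \<Sum>k\<le>m. dz jp (\<lambda>w. C k * dz (k + jq) (\<lambda>u. f u $ q) w) w)"
      by (rule dz_sum) (auto intro!: Cinf_cmult Cinf_dz cf)
    then show ?thesis by (simp add: dz_cmult Cinf_dz cf dz_dz add.assoc)
  qed
  show ?thesis unfolding Jbb_def vec_lambda_beta inner outer ..
qed

lemma int_sum3:
  assumes "finite S1" "finite S2" "finite S3" "\<And>i j k. Cinf (F i j k)"
  shows "integral {a..b} (\<lambda>z. \<Sum>i\<in>S1. \<Sum>j\<in>S2. \<Sum>k\<in>S3. F i j k z) =
     (\<Sum>i\<in>S1. \<Sum>j\<in>S2. \<Sum>k\<in>S3. integral {a..b} (F i j k))"
proof -
  have "integral {a..b} (\<lambda>z. \<Sum>i\<in>S1. \<Sum>j\<in>S2. \<Sum>k\<in>S3. F i j k z) =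
     (\<Sum>i\<in>S1. integral {a..b} (\<lambda>z. \<Sum>j\<in>S2. \<Sum>k\<in>S3. F i j k z))"
    by (rule int_sum) (auto intro!: Cinf_sum assms)
  also have "\<dots> = (\<Sum>i\<in>S1. \<Sum>j\<in>S2. integral {a..b} (\<lambda>z. \<Sum>k\<in>S3. F i j k z))"
    by (intro sum.cong refl int_sum) (auto intro!: Cinf_sum assms)
  also have "\<dots> = (\<Sum>i\<in>S1. \<Sum>j\<in>S2. \<Sum>k\<in>S3. integral {a..b} (F i j k))"
    by (intro sum.cong refl int_sum) (auto intro!: Cinf_sum assms)
  finally show ?thesis .
qed

lemma sign_id: "(x::real) * (-1) ^ jq * ((-1) ^ (jp + k + jq) * A) = - ((-1) ^ (k + 1) * x * (-1) ^ jp * A)"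
  by (cases "even jq"; cases "even jp"; cases "even k") (simp_all add: power_add)

lemma skew:
  fixes P :: "nat \<Rightarrow> real^'n^'n" and I :: "'l::finite \<Rightarrow> ('n::finite) \<times> nat"
  assumes skewP: "\<And>j. j \<le> m \<Longrightarrow> P j = ((-1) ^ (j + 1)) *\<^sub>R transpose (P j)"
  shows "formally_skew_adjoint a b (Jbb P m I)"
  unfolding formally_skew_adjoint_def
proof (intro allI impI)
  fix e f :: "real \<Rightarrow> real^'l"
  assume te: "test_fun a b e" and tf: "test_fun a b f"
  have ce: "Cinf (\<lambda>w. e w $ p)" for p using te smooth_real_iff unfolding test_fun_def by blast
  have cf: "Cinf (\<lambda>w. f w $ p)" for p using tf smooth_real_iff unfolding test_fun_def by blast
  obtain c1 d1 where cd1: "a < c1" "c1 \<le> d1" "d1 < b" and se: "\<And>z. z \<notin> {c1..d1} \<Longrightarrow> e z = 0"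
    using te unfolding test_fun_def by blast
  obtain c2 d2 where cd2: "a < c2" "c2 \<le> d2" "d2 < b" and sf: "\<And>z. z \<notin> {c2..d2} \<Longrightarrow> f z = 0"
    using tf unfolding test_fun_def by blast
  have sfq: "f z $ q = 0" if "z \<notin> {c2..d2}" for z q using sf[OF that] by simp
  define N where "N p q k = snd (I p) + k + snd (I q)" for p q k
  define A where "A p q k = integral {a..b} (\<lambda>z. dz (N p q k) (\<lambda>w. e w $ p) z * f z $ q)" for p q k
  define C where "C p q k = P k $ fst (I p) $ fst (I q) * (-1) ^ snd (I q)" for p q k
  have L: "integral {a..b} (\<lambda>z. e z \<bullet> Jbb P m I f z) =
      (\<Sum>p\<in>UNIV. \<Sum>q\<in>UNIV. \<Sum>k\<in>{..m}. C p q k * ((-1) ^ N p q k * A p q k))"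
  proof -
    have "(\<lambda>z. e z \<bullet> Jbb P m I f z) =
        (\<lambda>z. \<Sum>p\<in>UNIV. \<Sum>q\<in>UNIV. \<Sum>k\<in>{..m}. C p q k * (e z $ p * dz (N p q k) (\<lambda>u. f u $ q) z))"
      by (simp add: inner_vec_def Jbb_expand[OF cf] sum_distrib_left C_def N_def mult_ac)
    then have "integral {a..b} (\<lambda>z. e z \<bullet> Jbb P m I f z) =
        (\<Sum>p\<in>UNIV. \<Sum>q\<in>UNIV. \<Sum>k\<in>{..m}. integral {a..b} (\<lambda>z. C p q k * (e z $ p * dz (N p q k) (\<lambda>u. f u $ q) z)))"
      by (simp only:) (rule int_sum3, auto intro!: Cinf_cmult Cinf_mult ce Cinf_dz cf)
    also have "\<dots> = (\<Sum>p\<in>UNIV. \<Sum>q\<in>UNIV. \<Sum>k\<in>{..m}. C p q k * ((-1) ^ N p q k * A p q k))"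
    proof (intro sum.cong refl)
      fix p q k
      have "integral {a..b} (\<lambda>z. e z $ p * dz (N p q k) (\<lambda>u. f u $ q) z) =
          (-1) ^ N p q k * integral {a..b} (\<lambda>z. dz (N p q k) (\<lambda>w. e w $ p) z * f z $ q)"
        by (rule ibpN[OF cf cd2 sfq ce])
      then show "integral {a..b} (\<lambda>z. C p q k * (e z $ p * dz (N p q k) (\<lambda>u. f u $ q) z)) =
          C p q k * ((-1) ^ N p q k * A p q k)"
        by (simp add: A_def)
    qed
    finally show ?thesis .
  qed
  have R: "integral {a..b} (\<lambda>z. Jbb P m I e z \<bullet> f z) =
      (\<Sum>q\<in>UNIV. \<Sum>p\<in>UNIV. \<Sum>k\<in>{..m}. (P k $ fst (I q) $ fst (I p) * (-1) ^ snd (I p)) * A p q k)"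
  proof -
    have "(\<lambda>z. Jbb P m I e z \<bullet> f z) =
        (\<lambda>z. \<Sum>q\<in>UNIV. \<Sum>p\<in>UNIV. \<Sum>k\<in>{..m}. (P k $ fst (I q) $ fst (I p) * (-1) ^ snd (I p)) *
            (dz (N p q k) (\<lambda>u. e u $ p) z * f z $ q))"
      by (simp add: inner_vec_def Jbb_expand[OF ce] sum_distrib_left sum_distrib_right N_def mult_ac add_ac)
    then have "integral {a..b} (\<lambda>z. Jbb P m I e z \<bullet> f z) =
        (\<Sum>q\<in>UNIV. \<Sum>p\<in>UNIV. \<Sum>k\<in>{..m}. integral {a..b} (\<lambda>z. (P k $ fst (I q) $ fst (I p) * (-1) ^ snd (I p)) *
            (dz (N p q k) (\<lambda>u. e u $ p) z * f z $ q)))"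
      by (simp only:) (rule int_sum3, auto intro!: Cinf_cmult Cinf_mult ce Cinf_dz cf)
    also have "\<dots> = (\<Sum>q\<in>UNIV. \<Sum>p\<in>UNIV. \<Sum>k\<in>{..m}. (P k $ fst (I q) $ fst (I p) * (-1) ^ snd (I p)) * A p q k)"
      by (simp add: A_def)
    finally show ?thesis .
  qed
  have coef: "P k $ r $ c = (-1) ^ (k + 1) * P k $ c $ r" if "k \<le> m" for k r c
  proof -
    have "P k $ r $ c = (((-1) ^ (k + 1)) *\<^sub>R transpose (P k)) $ r $ c"
      using skewP[OF that] by simp
    also have "\<dots> = (-1) ^ (k + 1) * P k $ c $ r" by (simp add: transpose_def)
    finally show ?thesis .
  qed
  have termeq: "C p q k * ((-1) ^ N p q k * A p q k) =
        - (P k $ fst (I q) $ fst (I p) * (-1) ^ snd (I p) * A p q k)" if k: "k \<in> {..m}" for p q k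
  proof -
    have "C p q k * ((-1) ^ N p q k * A p q k) =
        P k $ fst (I p) $ fst (I q) * (-1) ^ snd (I q) * ((-1) ^ (snd (I p) + k + snd (I q)) * A p q k)"
      by (simp only: C_def N_def)
    also have "\<dots> = - ((-1) ^ (k + 1) * P k $ fst (I p) $ fst (I q) * (-1) ^ snd (I p) * A p q k)"
      by (rule sign_id)
    also have "(-1) ^ (k + 1) * P k $ fst (I p) $ fst (I q) = P k $ fst (I q) $ fst (I p)"
      using coef[of k "fst (I q)" "fst (I p)"] k by simp
    finally show ?thesis .
  qed
  have "(\<Sum>p\<in>UNIV. \<Sum>q\<in>UNIV. \<Sum>k\<in>{..m}. C p q k * ((-1) ^ N p q k * A p q k)) =
      (\<Sum>p\<in>UNIV. \<Sum>q\<in>UNIV. \<Sum>k\<in>{..m}. - (P k $ fst (I q) $ fst (I p) * (-1) ^ snd (I p) * A p q k))"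
    by (rule sum.cong[OF refl], rule sum.cong[OF refl], rule sum.cong[OF refl], rule termeq)
  also have "\<dots> = - (\<Sum>p\<in>UNIV. \<Sum>q\<in>UNIV. \<Sum>k\<in>{..m}. (P k $ fst (I q) $ fst (I p) * (-1) ^ snd (I p)) * A p q k)"
    by (simp only: sum_negf)
  also have "\<dots> = - (\<Sum>q\<in>UNIV. \<Sum>p\<in>UNIV. \<Sum>k\<in>{..m}. (P k $ fst (I q) $ fst (I p) * (-1) ^ snd (I p)) * A p q k)"
    by (subst sum.swap) rule
  finally show "integral {a..b} (\<lambda>z. e z \<bullet> Jbb P m I f z) = - integral {a..b} (\<lambda>z. Jbb P m I e z \<bullet> f z)"
    using L R by simp
qed

theorem proposition3:
  fixes a b :: real and m m_d :: nat
    and P :: "nat \<Rightarrow> real^'n^'n"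
    and I :: "'l::{finite,linorder} \<Rightarrow> 'n \<times> nat"
    and H :: "real^('l::{finite,linorder}) \<Rightarrow> real"
    and x g :: "real \<Rightarrow> real \<Rightarrow> real^'n"
  assumes skewP: "\<And>j. j \<le> m \<Longrightarrow> P j = ((-1) ^ (j + 1)) *\<^sub>R transpose (P j)"
    and I_inj: "inj I"
    and I_range: "\<And>p. snd (I p) \<le> m_d"
    and I_sorted: "\<And>p q. p \<le> q \<Longrightarrow> snd (I p) \<le> snd (I q)"
    and H_smooth: "smooth H"
    and x_smooth: "\<And>i. smooth (\<lambda>(t, z). x t z $ i)"
    and g_smooth: "\<And>i. smooth (\<lambda>(t, z). g t z $ i)"
    and g_var: "\<And>t. is_var_deriv a b (Hfunc a b H I) (x t) (g t)"
    and sol: "\<And>t z i. z \<in> {a<..<b} \<Longrightarrow>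
                 deriv (\<lambda>s. x s z $ i) t = Jop P m (g t) z $ i"
  shows "(\<forall>t z p. z \<in> {a<..<b} \<longrightarrow>
            deriv (\<lambda>s. dz (snd (I p)) (\<lambda>w. x s w $ fst (I p)) z) t
            = Jbb P m I
                (\<lambda>w. \<chi> q. pder (axis q 1) H
                        (\<chi> r. dz (snd (I r)) (\<lambda>u. x t u $ fst (I r)) w)) z $ p)
         \<and> formally_skew_adjoint a b (Jbb P m I)"
proof -
  have 1: "\<forall>t z p. z \<in> {a<..<b} \<longrightarrow>
            deriv (\<lambda>s. dz (snd (I p)) (\<lambda>w. x s w $ fst (I p)) z) t
            = Jbb P m I
                (\<lambda>w. \<chi> q. pder (axis q 1) H
                        (\<chi> r. dz (snd (I r)) (\<lambda>u. x t u $ fst (I r)) w)) z $ p"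
    using time_eq[OF H_smooth x_smooth g_smooth g_var sol] by blast
  have 2: "formally_skew_adjoint a b (Jbb P m I)" by (rule skew[OF skewP])
  show ?thesis using 1 2 by blast
qed

end
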